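(* For $j=1,2$ let $\mathscr T_j$ be a leafless, locally finite rooted directed tree with set of branching vertices $V^{(j)}_\prec$, and let $S^{(j)}_{\lambda,1}$ be the Dirichlet shift with parameter $q=1$ on $\mathscr T_j$. Then $S^{(1)}_{\lambda,1}$ is unitarily equivalent to $S^{(2)}_{\lambda,1}$ if and only if $$\sum_{v\in V^{(1)}_\prec}\big(\mathrm{card}(\mathsf{Chi}(v))-1\big)=\sum_{v\in V^{(2)}_\prec}\big(\mathrm{card}(\mathsf{Chi}(v))-1\big)$$ (as cardinal numbers, possibly infinite).
   Context: A directed tree $\mathscr T=(V,\mathcal E)$ is a directed graph with no circuits, connected, in which every non-root vertex has a unique parent; rooted means a unique vertex $\mathsf{root}$ has no parent. $\mathsf{Chi}(v)=\{u:(v,u)\in\mathcal E\}$; $\mathsf{Chi}^{\langle n\rangle}$ denotes the $n$-fold iterate. Locally finite: each $\mathsf{Chi}(v)$ finite; leafless: each $\mathsf{Chi}(v)$ nonempty; $V$ is countably infinite. Depth $n_v$: the unique $n$ with $v\in\mathsf{Chi}^{\langle n\rangle}(\mathsf{root})$. Branching vertices: $V_\prec=\{v:\mathrm{card}(\mathsf{Chi}(v))\geqslant2\}$. The weighted shift on $\ell^2(V)$ (orthonormal basis $\{e_u\}$) with weights $\{\lambda_u\}_{u\neq\mathsf{root}}$ is $S_\lambda e_v=\sum_{u\in\mathsf{Chi}(v)}\lambda_ue_u$. For real $q\geqslant1$ the Dirichlet shift $S_{\lambda,q}$ has weights $\lambda_{u,q}=\frac{1}{\sqrt{\mathrm{card}(\mathsf{Chi}(v))}}\sqrt{\frac{n_v+q}{n_v+1}}$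 for $u\in\mathsf{Chi}(v)$. *)

theory Defs
  imports "HOL-Analysis.Analysis"
begin

definition directed_tree :: "'a set \<Rightarrow> ('a \<times> 'a) set \<Rightarrow> bool" where
  "directed_tree V E \<longleftrightarrow>
     E \<subseteq> V \<times> V \<and>
     (\<forall>v. (v, v) \<notin> E\<^sup>+) \<and>
     (\<forall>u\<in>V. \<forall>v\<in>V. (u, v) \<in> (E \<union> E\<inverse>)\<^sup>*) \<and>
     (\<forall>v u w. (u, v) \<in> E \<and> (w, v) \<in> E \<longrightarrow> u = w)"

definition Chi :: "('a \<times> 'a) set \<Rightarrow> 'a \<Rightarrow> 'a set" where
  "Chi E v = {u. (v, u) \<in> E}"

definition is_root :: "'a set \<Rightarrow> ('a \<times> 'a) set \<Rightarrow> 'a \<Rightarrow> bool" where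
  "is_root V E r \<longleftrightarrow> r \<in> V \<and> (\<forall>u. (u, r) \<notin> E)"

definition rooted_directed_tree :: "'a set \<Rightarrow> ('a \<times> 'a) set \<Rightarrow> 'a \<Rightarrow> bool" where
  "rooted_directed_tree V E r \<longleftrightarrow>
     directed_tree V E \<and> is_root V E r \<and> (\<forall>r'. is_root V E r' \<longrightarrow> r' = r)"

definition locally_finite :: "'a set \<Rightarrow> ('a \<times> 'a) set \<Rightarrow> bool" where
  "locally_finite V E \<longleftrightarrow> (\<forall>v\<in>V. finite (Chi E v))"

definition leafless :: "'a set \<Rightarrow> ('a \<times> 'a) set \<Rightarrow> bool" where
  "leafless V E \<longleftrightarrow> (\<forall>v\<in>V. Chi E v \<noteq> {})"

definition branching :: "'a set \<Rightarrow> ('a \<times> 'a) set \<Rightarrow> 'a set" where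
  "branching V E = {v \<in> V. card (Chi E v) \<ge> 2}"

definition parent :: "('a \<times> 'a) set \<Rightarrow> 'a \<Rightarrow> 'a" where
  "parent E u = (THE v. (v, u) \<in> E)"

definition Chi_set :: "('a \<times> 'a) set \<Rightarrow> 'a set \<Rightarrow> 'a set" where
  "Chi_set E W = (\<Union>w\<in>W. Chi E w)"

definition depth :: "('a \<times> 'a) set \<Rightarrow> 'a \<Rightarrow> 'a \<Rightarrow> nat" where
  "depth E r v = (THE n. v \<in> (Chi_set E ^^ n) {r})"

definition ell2 :: "'a set \<Rightarrow> ('a \<Rightarrow> complex) set" where
  "ell2 V = {f. (\<forall>x. x \<notin> V \<longrightarrow> f x = 0) \<and> (\<lambda>x. (cmod (f x))\<^sup>2) summable_on V}"

definition ell2_normsq :: "'a set \<Rightarrow> ('a \<Rightarrow> complex) \<Rightarrow> real" where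
  "ell2_normsq V f = (\<Sum>\<^sub>\<infinity>x\<in>V. (cmod (f x))\<^sup>2)"

text \<open>Weighted shift: (S f)(u) = \<lambda>_u f(parent u) for u \<noteq> root, (S f)(root) = 0;
  equivalently S e_v = \<Sum>_{u \<in> Chi v} \<lambda>_u e_u.\<close>
definition weighted_shift ::
  "'a set \<Rightarrow> ('a \<times> 'a) set \<Rightarrow> 'a \<Rightarrow> ('a \<Rightarrow> real) \<Rightarrow> ('a \<Rightarrow> complex) \<Rightarrow> ('a \<Rightarrow> complex)" where
  "weighted_shift V E r lam f =
     (\<lambda>u. if u \<in> V \<and> u \<noteq> r then complex_of_real (lam u) * f (parent E u) else 0)"

definition dirichlet_weight :: "('a \<times> 'a) set \<Rightarrow> 'a \<Rightarrow> real \<Rightarrow> 'a \<Rightarrow> real" where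
  "dirichlet_weight E r q u =
     (let v = parent E u; n = real (depth E r v) in
      (1 / sqrt (real (card (Chi E v)))) * sqrt ((n + q) / (n + 1)))"

definition dirichlet_shift ::
  "'a set \<Rightarrow> ('a \<times> 'a) set \<Rightarrow> 'a \<Rightarrow> real \<Rightarrow> ('a \<Rightarrow> complex) \<Rightarrow> ('a \<Rightarrow> complex)" where
  "dirichlet_shift V E r q = weighted_shift V E r (dirichlet_weight E r q)"

definition unitarily_equivalent ::
  "'a set \<Rightarrow> (('a \<Rightarrow> complex) \<Rightarrow> ('a \<Rightarrow> complex)) \<Rightarrow>
   'b set \<Rightarrow> (('b \<Rightarrow> complex) \<Rightarrow> ('b \<Rightarrow> complex)) \<Rightarrow> bool" where
  "unitarily_equivalent V1 S1 V2 S2 \<longleftrightarrow>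
     (\<exists>U. bij_betw U (ell2 V1) (ell2 V2) \<and>
          (\<forall>f\<in>ell2 V1. \<forall>g\<in>ell2 V1. U (\<lambda>x. f x + g x) = (\<lambda>y. U f y + U g y)) \<and>
          (\<forall>f\<in>ell2 V1. \<forall>c. U (\<lambda>x. c * f x) = (\<lambda>y. c * U f y)) \<and>
          (\<forall>f\<in>ell2 V1. ell2_normsq V2 (U f) = ell2_normsq V1 f) \<and>
          (\<forall>f\<in>ell2 V1. U (S1 f) = S2 (U f)))"

end

theory Submission
  imports Defs
begin


lemma ennreal_infsum_SUP:
  "infsum (f :: 'x \<Rightarrow> ennreal) A = (SUP F\<in>{F. finite F \<and> F \<subseteq> A}. sum f F)"
  by (rule nonneg_infsum_complete) simp

lemma ennreal_infsum_Sigma_finite: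
  fixes f :: "'x \<times> 'y \<Rightarrow> ennreal"
  assumes fin: "\<And>x. x \<in> A \<Longrightarrow> finite (B x)"
  shows "infsum f (Sigma A B) = infsum (\<lambda>x. sum (\<lambda>y. f (x,y)) (B x)) A"
proof (rule antisym)
  show "infsum f (Sigma A B) \<le> infsum (\<lambda>x. sum (\<lambda>y. f (x,y)) (B x)) A"
    unfolding ennreal_infsum_SUP[of f]
  proof (rule SUP_least)
    fix G assume G: "G \<in> {F. finite F \<and> F \<subseteq> Sigma A B}"
    have fin1: "finite (fst ` G)" using G by auto
    have sub: "fst ` G \<subseteq> A" using G by auto
    have "sum f G \<le> sum f (Sigma (fst ` G) B)"
      apply (rule sum_mono2)
      subgoal using fin1 fin sub by auto
      subgoal using G by force
      subgoal by simp
      done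
    also have "\<dots> = (\<Sum>x\<in>fst ` G. \<Sum>y\<in>B x. f (x,y))"
    proof -
      have "(\<Sum>x\<in>fst ` G. \<Sum>y\<in>B x. f (x,y)) = (\<Sum>(x,y)\<in>Sigma (fst ` G) B. f (x,y))"
        by (rule sum.Sigma) (use fin1 fin sub in auto)
      then show ?thesis by simp
    qed
    also have "\<dots> \<le> infsum (\<lambda>x. sum (\<lambda>y. f (x,y)) (B x)) A"
      unfolding ennreal_infsum_SUP[of "\<lambda>x. sum (\<lambda>y. f (x,y)) (B x)"]
      by (rule SUP_upper) (use fin1 sub in auto)
    finally show "sum f G \<le> infsum (\<lambda>x. sum (\<lambda>y. f (x,y)) (B x)) A" .
  qed
next
  show "infsum (\<lambda>x. sum (\<lambda>y. f (x,y)) (B x)) A \<le> infsum f (Sigma A B)"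
    unfolding ennreal_infsum_SUP[of "\<lambda>x. sum (\<lambda>y. f (x,y)) (B x)"]
  proof (rule SUP_least)
    fix F assume F: "F \<in> {F. finite F \<and> F \<subseteq> A}"
    have "(\<Sum>x\<in>F. \<Sum>y\<in>B x. f (x,y)) = (\<Sum>(x,y)\<in>Sigma F B. f (x,y))"
      by (rule sum.Sigma) (use F fin in auto)
    then have "(\<Sum>x\<in>F. \<Sum>y\<in>B x. f (x,y)) = sum f (Sigma F B)" by simp
    also have "\<dots> \<le> infsum f (Sigma A B)"
      unfolding ennreal_infsum_SUP[of f]
      by (rule SUP_upper) (use F fin in auto)
    finally show "(\<Sum>x\<in>F. \<Sum>y\<in>B x. f (x,y)) \<le> infsum f (Sigma A B)" .
  qed
qed

lemma real_infsum_ennreal: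
  fixes g :: "'x \<Rightarrow> real"
  assumes nn: "\<And>x. x \<in> A \<Longrightarrow> g x \<ge> 0" and sm: "g summable_on A"
  shows "ennreal (infsum g A) = infsum (\<lambda>x. ennreal (g x)) A"
proof -
  have "ennreal (infsum g A) = (SUP F\<in>{F. finite F \<and> F \<subseteq> A}. (ennreal (sum g F)))"
    by (rule infsum_nonneg_is_SUPREMUM_ennreal[OF sm nn])
  also have "\<dots> = (SUP F\<in>{F. finite F \<and> F \<subseteq> A}. (\<Sum>x\<in>F. ennreal (g x)))"
    by (intro SUP_cong refl sum_ennreal[symmetric]) (use nn in auto)
  also have "\<dots> = infsum (\<lambda>x. ennreal (g x)) A"
    by (rule ennreal_infsum_SUP[symmetric])
  finally show ?thesis .
qed

lemma real_summable_iff_ennreal: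
  fixes g :: "'x \<Rightarrow> real"
  assumes nn: "\<And>x. x \<in> A \<Longrightarrow> g x \<ge> 0"
  shows "g summable_on A \<longleftrightarrow> infsum (\<lambda>x. ennreal (g x)) A < \<infinity>"
proof
  assume sm: "g summable_on A"
  have e: "infsum (\<lambda>x. ennreal (g x)) A = ennreal (infsum g A)"
    using real_infsum_ennreal[OF nn sm] by simp
  show "infsum (\<lambda>x. ennreal (g x)) A < \<infinity>"
    unfolding e by simp
next
  assume lt: "infsum (\<lambda>x. ennreal (g x)) A < \<infinity>"
  let ?M = "infsum (\<lambda>x. ennreal (g x)) A"
  show "g summable_on A"
  proof (rule nonneg_bdd_above_summable_on)
    show "\<And>x. x \<in> A \<Longrightarrow> 0 \<le> g x" by (rule nn)
    show "bdd_above (sum g ` {F. F \<subseteq> A \<and> finite F})"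
    proof (rule bdd_aboveI)
      fix s assume "s \<in> sum g ` {F. F \<subseteq> A \<and> finite F}"
      then obtain F where F: "F \<subseteq> A" "finite F" and s: "s = sum g F" by auto
      have "ennreal (sum g F) = (\<Sum>x\<in>F. ennreal (g x))"
        by (rule sum_ennreal[symmetric]) (use F nn in auto)
      also have "\<dots> \<le> ?M"
        unfolding ennreal_infsum_SUP[of "\<lambda>x. ennreal (g x)"]
        by (rule SUP_upper) (use F in auto)
      finally have "ennreal (sum g F) \<le> ?M" .
      then have "enn2real (ennreal (sum g F)) \<le> enn2real ?M"
        using lt by (intro enn2real_mono) auto
      moreover have "sum g F \<ge> 0" using F nn by (auto intro: sum_nonneg)
      ultimately show "s \<le> enn2real ?M" using s by simp
    qed
  qed
qed


definition omg :: "nat \<Rightarrow> complex" where "omg k = cis (2 * pi / real k)"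

lemma omg_pow: "omg k ^ n = cis (real n * (2 * pi / real k))"
  unfolding omg_def by (simp only: Complex.DeMoivre)

lemma dft_orth:
  assumes k: "k > 0" and s: "s < k" and t: "t < k"
  shows "(\<Sum>i<k. omg k ^ (i * s) * cnj (omg k ^ (i * t))) = (if s = t then of_nat k else 0)"
proof -
  define z where "z = cis (2 * pi * (real s - real t) / real k)"
  have trm: "omg k ^ (i * s) * cnj (omg k ^ (i * t)) = z ^ i" for i
    unfolding z_def omg_pow cis_cnj cis_mult Complex.DeMoivre
    by (rule arg_cong[where f=cis]) (simp add: algebra_simps diff_divide_distrib)
  show ?thesis
  proof (cases "s = t")
    case True
    then have "z = 1" unfolding z_def by simp
    have "(\<Sum>i<k. omg k ^ (i * s) * cnj (omg k ^ (i * t))) = (\<Sum>i<k. z ^ i)"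
      by (simp only: trm)
    then show ?thesis using True \<open>z = 1\<close> by simp
  next
    case False
    have zk: "z ^ k = 1"
    proof -
      have "z ^ k = cis (real k * (2 * pi * (real s - real t) / real k))"
        unfolding z_def by (rule Complex.DeMoivre)
      also have "real k * (2 * pi * (real s - real t) / real k) = 2 * pi * (real s - real t)"
        using k by simp
      also have "cis (2 * pi * (real s - real t)) = 1"
        by (rule cis_multiple_2pi) (intro Ints_diff Ints_of_nat)
      finally show ?thesis .
    qed
    have z1: "z \<noteq> 1"
    proof
      assume "z = 1"
      then have "cos (2 * pi * (real s - real t) / real k) = 1"
        unfolding z_def by (simp add: complex_eq_iff)
      then obtain m :: int where m: "2 * pi * (real s - real t) / real k = real_of_int m * 2 * pi"
        using cos_one_2pi_int by blast
      then have "2 * pi * (real s - real t) = (real_of_int m * real k) * (2 * pi)"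
        using k by (simp add: divide_eq_eq)
      then have "(real s - real t) = real_of_int m * real k"
        by simp
      then have "real_of_int (int s - int t) = real_of_int (m * int k)" by simp
      then have eq: "int s - int t = m * int k" by (simp only: of_int_eq_iff)
      have "\<bar>int s - int t\<bar> < int k" using s t by auto
      then have "\<bar>m\<bar> * int k < 1 * int k" using eq by (simp add: abs_mult)
      then have "\<bar>m\<bar> < 1" by (rule mult_right_less_imp_less) simp
      then have "m = 0" by simp
      then show False using eq False by simp
    qed
    have "(\<Sum>i<k. omg k ^ (i * s) * cnj (omg k ^ (i * t))) = (\<Sum>i<k. z ^ i)"
      by (simp only: trm)
    also have "\<dots> = (z ^ k - 1) / (z - 1)" by (rule geometric_sum[OF z1])
    also have "\<dots> = 0" using zk by simp
    finally show ?thesis using False by simp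
  qed
qed

definition dftc :: "nat \<Rightarrow> (nat \<Rightarrow> complex) \<Rightarrow> nat \<Rightarrow> complex" where
  "dftc k x t = complex_of_real (1 / sqrt (real k)) * (\<Sum>i<k. x i * cnj (omg k ^ (i * t)))"

definition idft :: "nat \<Rightarrow> (nat \<Rightarrow> complex) \<Rightarrow> nat \<Rightarrow> complex" where
  "idft k a i = complex_of_real (1 / sqrt (real k)) * (\<Sum>t<k. a t * omg k ^ (i * t))"

lemma csq:
  assumes "k > 0"
  shows "complex_of_real (1 / sqrt (real k)) * complex_of_real (1 / sqrt (real k)) * of_nat k = 1"
proof -
  have "(1 / sqrt (real k)) * (1 / sqrt (real k)) * real k = 1"
    using assms by (simp add: real_sqrt_mult_self)
  then have "complex_of_real ((1 / sqrt (real k)) * (1 / sqrt (real k)) * real k) = 1" by simp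
  then show ?thesis by (simp only: of_real_mult of_real_of_nat_eq)
qed

lemma dft_idft:
  assumes k: "k > 0" and t: "t < k"
  shows "dftc k (idft k a) t = a t"
proof -
  let ?c = "complex_of_real (1 / sqrt (real k))"
  have "dftc k (idft k a) t = ?c * (\<Sum>i<k. (?c * (\<Sum>s<k. a s * omg k ^ (i * s))) * cnj (omg k ^ (i * t)))"
    by (simp add: dftc_def idft_def)
  also have "\<dots> = ?c * ?c * (\<Sum>i<k. \<Sum>s<k. a s * (omg k ^ (i * s) * cnj (omg k ^ (i * t))))"
    by (simp add: sum_distrib_left sum_distrib_right mult.assoc)
  also have "\<dots> = ?c * ?c * (\<Sum>s<k. \<Sum>i<k. a s * (omg k ^ (i * s) * cnj (omg k ^ (i * t))))"
    by (subst sum.swap) (rule refl)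
  also have "\<dots> = ?c * ?c * (\<Sum>s<k. a s * (\<Sum>i<k. omg k ^ (i * s) * cnj (omg k ^ (i * t))))"
    by (simp add: sum_distrib_left)
  also have "\<dots> = ?c * ?c * (\<Sum>s<k. a s * (if s = t then of_nat k else 0))"
    using dft_orth[OF k _ t] by simp
  also have "\<dots> = ?c * ?c * of_nat k * a t"
    using t by (simp add: if_distrib[of "\<lambda>x. _ * x"] sum.delta mult_ac cong: if_cong)
  also have "\<dots> = a t" using csq[OF k] by simp
  finally show ?thesis .
qed

lemma sum_swap3:
  "(\<Sum>t\<in>A. \<Sum>j\<in>B. \<Sum>i\<in>C. f t j i) = (\<Sum>j\<in>B. \<Sum>i\<in>C. \<Sum>t\<in>A. f t j i)"
proof -
  have "(\<Sum>t\<in>A. \<Sum>j\<in>B. \<Sum>i\<in>C. f t j i) = (\<Sum>j\<in>B. \<Sum>t\<in>A. \<Sum>i\<in>C. f t j i)"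
    by (rule sum.swap)
  also have "\<dots> = (\<Sum>j\<in>B. \<Sum>i\<in>C. \<Sum>t\<in>A. f t j i)"
    by (rule sum.cong[OF refl], rule sum.swap)
  finally show ?thesis .
qed

lemma dft_parseval:
  assumes k: "k > 0"
  shows "(\<Sum>t<k. (cmod (dftc k x t))\<^sup>2) = (\<Sum>i<k. (cmod (x i))\<^sup>2)"
proof -
  let ?c = "complex_of_real (1 / sqrt (real k))"
  have cc: "cnj ?c = ?c" by simp
  have "complex_of_real (\<Sum>t<k. (cmod (dftc k x t))\<^sup>2) = (\<Sum>t<k. dftc k x t * cnj (dftc k x t))"
    by (simp only: of_real_sum complex_norm_square)
  also have "\<dots> = (\<Sum>t<k. ?c * ?c * (\<Sum>j<k. \<Sum>i<k. x i * cnj (x j) * (omg k ^ (t * j) * cnj (omg k ^ (t * i)))))"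
    by (simp add: dftc_def sum_distrib_left sum_distrib_right mult_ac sum_product cnj_sum)
  also have "\<dots> = ?c * ?c * (\<Sum>t<k. \<Sum>j<k. \<Sum>i<k. x i * cnj (x j) * (omg k ^ (t * j) * cnj (omg k ^ (t * i))))"
    by (simp only: sum_distrib_left)
  also have "\<dots> = ?c * ?c * (\<Sum>j<k. \<Sum>i<k. \<Sum>t<k. x i * cnj (x j) * (omg k ^ (t * j) * cnj (omg k ^ (t * i))))"
    by (rule arg_cong[where f="\<lambda>z. ?c * ?c * z"], rule sum_swap3)
  also have "\<dots> = ?c * ?c * (\<Sum>j<k. \<Sum>i<k. x i * cnj (x j) * (\<Sum>t<k. omg k ^ (t * j) * cnj (omg k ^ (t * i))))"
    by (simp only: sum_distrib_left)
  also have "\<dots> = ?c * ?c * (\<Sum>j<k. \<Sum>i<k. x i * cnj (x j) * (if j = i then of_nat k else 0))"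
    using dft_orth[OF k] by simp
  also have "\<dots> = ?c * ?c * of_nat k * (\<Sum>j<k. x j * cnj (x j))"
    by (simp add: if_distrib[of "\<lambda>y. _ * y"] sum.delta sum_distrib_left sum_divide_distrib mult_ac cong: if_cong)
  also have "\<dots> = (\<Sum>i<k. x i * cnj (x i))" using csq[OF k] by simp
  also have "\<dots> = complex_of_real (\<Sum>i<k. (cmod (x i))\<^sup>2)"
    by (simp only: of_real_sum complex_norm_square)
  finally show ?thesis by (simp only: of_real_eq_iff)
qed


locale tree =
  fixes V :: "'a set" and E :: "('a \<times> 'a) set" and r :: 'a
  assumes rdt: "rooted_directed_tree V E r"
    and lfl: "leafless V E" and lfin: "locally_finite V E"
begin

lemma dt: "directed_tree V E"
  using rdt unfolding rooted_directed_tree_def by (rule conjunct1)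

lemma isr: "is_root V E r"
  using rdt unfolding rooted_directed_tree_def by (elim conjE)

lemma root_uniq: "is_root V E r' \<Longrightarrow> r' = r"
  using rdt unfolding rooted_directed_tree_def by (elim conjE) (erule allE, erule mp)

lemma dt_parts1: "E \<subseteq> V \<times> V"
  using dt unfolding directed_tree_def by (elim conjE)

lemma dt_parts2: "\<forall>u\<in>V. \<forall>v\<in>V. (u, v) \<in> (E \<union> E\<inverse>)\<^sup>*"
  using dt unfolding directed_tree_def by (elim conjE)

lemma dt_parts3: "\<forall>v u w. (u, v) \<in> E \<and> (w, v) \<in> E \<longrightarrow> u = w"
  using dt unfolding directed_tree_def by (elim conjE)

lemma E_sub: "E \<subseteq> V \<times> V" by (rule dt_parts1)

lemma r_in: "r \<in> V"
  using isr unfolding is_root_def by (elim conjE)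

lemma no_par_r: "(u, r) \<notin> E"
  using isr unfolding is_root_def by (elim conjE) (erule allE)

lemma uniq_par: "(u, v) \<in> E \<Longrightarrow> (w, v) \<in> E \<Longrightarrow> u = w"
  using dt_parts3 by blast

lemma conn: "u \<in> V \<Longrightarrow> v \<in> V \<Longrightarrow> (u, v) \<in> (E \<union> E\<inverse>)\<^sup>*"
  using dt_parts2 by blast

lemma Chi_sub: "Chi E v \<subseteq> V"
  using E_sub unfolding Chi_def by blast

lemma Chi_out: "v \<notin> V \<Longrightarrow> Chi E v = {}"
  using E_sub unfolding Chi_def by blast

lemma Chi_fin: "finite (Chi E v)"
  using lfin Chi_out unfolding locally_finite_def by (cases "v \<in> V") auto

lemma Chi_ne: "v \<in> V \<Longrightarrow> Chi E v \<noteq> {}"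
  using lfl unfolding leafless_def by blast

lemma Chi_iff: "u \<in> Chi E v \<longleftrightarrow> (v, u) \<in> E"
  unfolding Chi_def by simp

lemma Chi_disj: "v \<noteq> v' \<Longrightarrow> Chi E v \<inter> Chi E v' = {}"
  unfolding Chi_def using uniq_par by blast

lemma has_par: "u \<in> V \<Longrightarrow> u \<noteq> r \<Longrightarrow> \<exists>v. (v, u) \<in> E"
  using root_uniq unfolding is_root_def by blast

lemma parent_eq: "(v, u) \<in> E \<Longrightarrow> parent E u = v"
  unfolding parent_def using uniq_par by blast

lemma parent_Chi: "u \<in> Chi E v \<Longrightarrow> parent E u = v"
  using parent_eq Chi_iff by blast

lemma Chi_not_r: "u \<in> Chi E v \<Longrightarrow> u \<noteq> r"
  using no_par_r Chi_iff by blast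

lemma parent_in: "u \<in> V \<Longrightarrow> u \<noteq> r \<Longrightarrow> u \<in> Chi E (parent E u)"
  using has_par parent_eq Chi_iff by blast

lemma parent_V: "u \<in> V \<Longrightarrow> u \<noteq> r \<Longrightarrow> parent E u \<in> V"
  using parent_in E_sub Chi_iff by blast

definition k :: "'a \<Rightarrow> nat" where "k v = card (Chi E v)"

lemma k_pos: "v \<in> V \<Longrightarrow> k v > 0"
  unfolding k_def using Chi_fin Chi_ne by (simp add: card_gt_0_iff)

subsection \<open>Levels\<close>

definition Lev :: "nat \<Rightarrow> 'a set" where "Lev n = (Chi_set E ^^ n) {r}"

lemma Lev_0: "Lev 0 = {r}" unfolding Lev_def by simp

lemma Lev_Suc: "Lev (Suc n) = (\<Union>v\<in>Lev n. Chi E v)"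
  unfolding Lev_def by (simp add: Chi_set_def)

lemma Lev_rel: "x \<in> Lev n \<longleftrightarrow> (r, x) \<in> E ^^ n"
proof (induction n arbitrary: x)
  case 0 then show ?case by (auto simp: Lev_0)
next
  case (Suc n)
  have "x \<in> Lev (Suc n) \<longleftrightarrow> (\<exists>v. v \<in> Lev n \<and> (v, x) \<in> E)"
    unfolding Lev_Suc by (auto simp: Chi_iff)
  also have "\<dots> \<longleftrightarrow> (\<exists>v. (r, v) \<in> E ^^ n \<and> (v, x) \<in> E)"
    using Suc.IH by blast
  also have "\<dots> \<longleftrightarrow> (r, x) \<in> E ^^ Suc n"
    by (blast intro: relpow_Suc_I elim: relpow_Suc_E)
  finally show ?case .
qed

lemma Lev_sub: "Lev n \<subseteq> V"
proof (cases n)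
  case 0 then show ?thesis using r_in by (simp add: Lev_0)
next
  case (Suc m) then show ?thesis using Chi_sub by (auto simp: Lev_Suc)
qed

lemma Lev_fin: "finite (Lev n)"
  by (induction n) (auto simp: Lev_0 Lev_Suc Chi_fin)

lemma relpow_back:
  assumes "(r, x) \<in> E ^^ n" "(r, x) \<in> E ^^ m" "n \<le> m"
  shows "(r, r) \<in> E ^^ (m - n)"
  using assms
proof (induction n arbitrary: x m)
  case 0 then show ?case by simp
next
  case (Suc n)
  from Suc.prems(1) obtain y where y: "(r, y) \<in> E ^^ n" "(y, x) \<in> E"
    by (rule relpow_Suc_E)
  from Suc.prems(3) obtain m' where m: "m = Suc m'" by (cases m) auto
  from Suc.prems(2) obtain y' where y': "(r, y') \<in> E ^^ m'" "(y', x) \<in> E"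
    unfolding m by (rule relpow_Suc_E)
  have "y = y'" using uniq_par y(2) y'(2) by blast
  then have ry: "(r, y) \<in> E ^^ m'" using y'(1) by simp
  have nm: "n \<le> m'" using Suc.prems(3) m by simp
  have "(r, r) \<in> E ^^ (m' - n)" by (rule Suc.IH[OF y(1) ry nm])
  moreover have "m - Suc n = m' - n" using m by simp
  ultimately show ?case by simp
qed

lemma Lev_disj: "x \<in> Lev n \<Longrightarrow> x \<in> Lev m \<Longrightarrow> n = m"
proof -
  have *: "n = m" if "x \<in> Lev n" "x \<in> Lev m" "n \<le> m" for n m
  proof (rule ccontr)
    assume "n \<noteq> m"
    then have "m - n = Suc (m - n - 1)" using that(3) by simp
    moreover have "(r, r) \<in> E ^^ (m - n)" using relpow_back that by (simp add: Lev_rel)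
    ultimately have "(r, r) \<in> E ^^ Suc (m - n - 1)" by simp
    then obtain y where "(y, r) \<in> E" by (rule relpow_Suc_E)
    then show False using no_par_r by blast
  qed
  assume "x \<in> Lev n" "x \<in> Lev m"
  then show "n = m" using *[of n m] *[of m n] by linarith
qed

lemma reach: "(r, x) \<in> (E \<union> E\<inverse>)\<^sup>* \<Longrightarrow> (r, x) \<in> E\<^sup>*"
proof (induction rule: rtrancl_induct)
  case base then show ?case by simp
next
  case (step y z)
  show ?case
  proof (cases "(y, z) \<in> E")
    case True then show ?thesis by (rule rtrancl_into_rtrancl[OF step.IH])
  next
    case False
    then have zy: "(z, y) \<in> E" using step.hyps(2) by blast
    then have "y \<noteq> r" using no_par_r by blast
    from step.IH \<open>y \<noteq> r\<close> obtain w where "(r, w) \<in> E\<^sup>*" "(w, y) \<in> E"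
      by (cases rule: rtranclE) auto
    then show ?thesis using uniq_par zy by blast
  qed
qed

lemma V_Lev: "x \<in> V \<Longrightarrow> \<exists>n. x \<in> Lev n"
proof -
  assume "x \<in> V"
  then have "(r, x) \<in> E\<^sup>*" using reach conn r_in by blast
  then obtain n where "(r, x) \<in> E ^^ n" using rtrancl_power by blast
  then show ?thesis using Lev_rel by blast
qed

definition lvl :: "'a \<Rightarrow> nat" where "lvl x = (THE n. x \<in> Lev n)"

lemma lvl_eq: "x \<in> Lev n \<Longrightarrow> lvl x = n"
  unfolding lvl_def using Lev_disj by blast

lemma lvl_in: "x \<in> V \<Longrightarrow> x \<in> Lev (lvl x)"
  using V_Lev lvl_eq by metis

lemma Lev_iff: "x \<in> Lev n \<longleftrightarrow> x \<in> V \<and> lvl x = n"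
  using lvl_eq lvl_in Lev_sub by blast

lemma Chi_Lev: "v \<in> Lev n \<Longrightarrow> Chi E v \<subseteq> Lev (Suc n)"
  by (auto simp: Lev_Suc)

end

context tree begin

definition wt :: "'a \<Rightarrow> real" where "wt v = 1 / sqrt (real (k v))"

definition Sadj :: "('a \<Rightarrow> complex) \<Rightarrow> 'a \<Rightarrow> complex" where
  "Sadj f v = complex_of_real (wt v) * (\<Sum>u\<in>Chi E v. f u)"

abbreviation S :: "('a \<Rightarrow> complex) \<Rightarrow> 'a \<Rightarrow> complex" where
  "S \<equiv> dirichlet_shift V E r 1"

lemma S_apply:
  "S f u = (if u \<in> V \<and> u \<noteq> r then complex_of_real (wt (parent E u)) * f (parent E u) else 0)"
proof -
  have "\<And>n::nat. (real n + 1) / (real n + 1) = 1"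
    by (metis add_nonneg_pos divide_self_if of_nat_0_le_iff zero_less_one less_irrefl)
  then show ?thesis
    unfolding dirichlet_shift_def weighted_shift_def dirichlet_weight_def wt_def k_def Let_def
    by simp
qed

definition ch :: "'a \<Rightarrow> nat \<Rightarrow> 'a" where
  "ch v = (SOME g. bij_betw g {..<k v} (Chi E v))"

lemma ch_bij: "bij_betw (ch v) {..<k v} (Chi E v)"
proof -
  obtain h where "bij_betw h {0..<card (Chi E v)} (Chi E v)"
    using ex_bij_betw_nat_finite[OF Chi_fin] by blast
  then have "\<exists>g. bij_betw g {..<k v} (Chi E v)"
    unfolding k_def atLeast0LessThan by blast
  then show ?thesis unfolding ch_def by (rule someI_ex)
qed

definition pos :: "'a \<Rightarrow> 'a \<Rightarrow> nat" where
  "pos v u = inv_into {..<k v} (ch v) u"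

lemma pos_ch: "i < k v \<Longrightarrow> pos v (ch v i) = i"
  unfolding pos_def using ch_bij by (simp add: bij_betw_def inv_into_f_f)

lemma ch_in: "i < k v \<Longrightarrow> ch v i \<in> Chi E v"
  using ch_bij by (auto simp: bij_betw_def)

lemma ch_pos: "u \<in> Chi E v \<Longrightarrow> ch v (pos v u) = u"
  unfolding pos_def using ch_bij by (simp add: bij_betw_def f_inv_into_f)

lemma pos_lt: "u \<in> Chi E v \<Longrightarrow> pos v u < k v"
  unfolding pos_def using ch_bij by (metis bij_betw_def inv_into_into lessThan_iff)

lemma sum_Chi: "(\<Sum>u\<in>Chi E v. g u) = (\<Sum>i<k v. g (ch v i))"
  using sum.reindex_bij_betw[OF ch_bij, of g] by simp

definition coef :: "('a \<Rightarrow> complex) \<Rightarrow> 'a \<Rightarrow> nat \<Rightarrow> complex" where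
  "coef f v t = dftc (k v) (\<lambda>i. f (ch v i)) t"

lemma coef0: "coef f v 0 = Sadj f v"
  unfolding coef_def dftc_def Sadj_def wt_def sum_Chi by simp

lemma lessThan_insert0: "0 < (n::nat) \<Longrightarrow> {..<n} = insert 0 {0<..<n}"
  by auto

lemma norm_Chi:
  assumes v: "v \<in> V"
  shows "(\<Sum>u\<in>Chi E v. (cmod (f u))\<^sup>2) =
         (cmod (Sadj f v))\<^sup>2 + (\<Sum>t\<in>{0<..<k v}. (cmod (coef f v t))\<^sup>2)"
proof -
  have kp: "k v > 0" using k_pos v by simp
  have "(\<Sum>u\<in>Chi E v. (cmod (f u))\<^sup>2) = (\<Sum>i<k v. (cmod (f (ch v i)))\<^sup>2)"
    by (rule sum_Chi)
  also have "\<dots> = (\<Sum>t<k v. (cmod (coef f v t))\<^sup>2)"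
    unfolding coef_def by (rule dft_parseval[OF kp, symmetric])
  also have "\<dots> = (cmod (coef f v 0))\<^sup>2 + (\<Sum>t\<in>{0<..<k v}. (cmod (coef f v t))\<^sup>2)"
    unfolding lessThan_insert0[OF kp] by (subst sum.insert) auto
  finally show ?thesis by (simp add: coef0)
qed

definition J :: "('a \<times> nat) set" where
  "J = insert (r, 0) {(v, t). v \<in> V \<and> 0 < t \<and> t < k v}"

definition lev :: "'a \<times> nat \<Rightarrow> nat" where
  "lev j = (if snd j = 0 then 0 else Suc (lvl (fst j)))"

definition inner0 :: "('a \<Rightarrow> complex) \<Rightarrow> 'a \<times> nat \<Rightarrow> complex" where
  "inner0 g j = (if snd j = 0 then g (fst j) else coef g (fst j) (snd j))"

definition Phi :: "('a \<Rightarrow> complex) \<Rightarrow> ('a \<times> nat) \<times> nat \<Rightarrow> complex" where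
  "Phi f p = (if fst p \<in> J then inner0 ((Sadj ^^ snd p) f) (fst p) else 0)"

definition Jle :: "nat \<Rightarrow> ('a \<times> nat) set" where
  "Jle N = {j \<in> J. lev j \<le> N}"

definition Jeq :: "nat \<Rightarrow> ('a \<times> nat) set" where
  "Jeq N = Sigma (Lev N) (\<lambda>v. {0<..<k v})"

lemma J_cases: "j \<in> J \<Longrightarrow> j = (r, 0) \<or> (fst j \<in> V \<and> 0 < snd j \<and> snd j < k (fst j))"
  unfolding J_def by auto

lemma Jle_0: "Jle 0 = {(r, 0)}"
  unfolding Jle_def J_def lev_def by auto

lemma Jeq_sub: "Jeq N \<subseteq> J"
  unfolding Jeq_def J_def using Lev_sub by auto

lemma lev_Jeq: "j \<in> Jeq N \<Longrightarrow> lev j = Suc N"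
  unfolding Jeq_def lev_def using lvl_eq by auto

lemma Jle_Suc: "Jle (Suc N) = Jle N \<union> Jeq N"
proof (rule set_eqI)
  fix j :: "'a \<times> nat"
  obtain v t where j: "j = (v, t)" by (cases j)
  show "j \<in> Jle (Suc N) \<longleftrightarrow> j \<in> Jle N \<union> Jeq N"
  proof (cases "t = 0")
    case True then show ?thesis unfolding Jle_def Jeq_def j lev_def by auto
  next
    case False
    then show ?thesis unfolding Jle_def Jeq_def j lev_def J_def
      using lvl_eq Lev_iff by auto
  qed
qed

lemma Jle_Jeq_disj: "Jle N \<inter> Jeq N = {}"
  unfolding Jle_def using lev_Jeq by fastforce

lemma Jeq_fin: "finite (Jeq N)"
  unfolding Jeq_def using Lev_fin by auto

lemma Jle_fin: "finite (Jle N)"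
  by (induction N) (auto simp: Jle_0 Jle_Suc Jeq_fin)

lemma inner0_Jeq: "j \<in> Jeq N \<Longrightarrow> inner0 g j = coef g (fst j) (snd j)"
  unfolding Jeq_def inner0_def by auto

lemma Sadj_pow_Suc: "(Sadj ^^ Suc m) f = (Sadj ^^ m) (Sadj f)"
  by (simp only: funpow.simps(2) comp_apply funpow_swap1)

lemma parseval_lev:
  "(\<Sum>x\<in>Lev N. (cmod (f x))\<^sup>2) = (\<Sum>j\<in>Jle N. (cmod (inner0 ((Sadj ^^ (N - lev j)) f) j))\<^sup>2)"
proof (induction N arbitrary: f)
  case 0
  show ?case by (simp add: Lev_0 Jle_0 lev_def inner0_def)
next
  case (Suc N)
  have "(\<Sum>x\<in>Lev (Suc N). (cmod (f x))\<^sup>2) = (\<Sum>v\<in>Lev N. \<Sum>u\<in>Chi E v. (cmod (f u))\<^sup>2)"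
    unfolding Lev_Suc
    by (rule sum.UNION_disjoint) (use Lev_fin Chi_fin Chi_disj in auto)
  also have "\<dots> = (\<Sum>v\<in>Lev N. (cmod (Sadj f v))\<^sup>2) + (\<Sum>v\<in>Lev N. \<Sum>t\<in>{0<..<k v}. (cmod (coef f v t))\<^sup>2)"
    by (simp add: sum.distrib norm_Chi subsetD[OF Lev_sub])
  also have "(\<Sum>v\<in>Lev N. (cmod (Sadj f v))\<^sup>2) =
       (\<Sum>j\<in>Jle N. (cmod (inner0 ((Sadj ^^ (Suc N - lev j)) f) j))\<^sup>2)"
  proof -
    have "(\<Sum>v\<in>Lev N. (cmod (Sadj f v))\<^sup>2) = (\<Sum>j\<in>Jle N. (cmod (inner0 ((Sadj ^^ (N - lev j)) (Sadj f)) j))\<^sup>2)"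
      by (rule Suc.IH)
    also have "\<dots> = (\<Sum>j\<in>Jle N. (cmod (inner0 ((Sadj ^^ (Suc N - lev j)) f) j))\<^sup>2)"
    proof (rule sum.cong[OF refl])
      fix j assume "j \<in> Jle N"
      then have "Suc N - lev j = Suc (N - lev j)" unfolding Jle_def by auto
      then show "(cmod (inner0 ((Sadj ^^ (N - lev j)) (Sadj f)) j))\<^sup>2 =
                 (cmod (inner0 ((Sadj ^^ (Suc N - lev j)) f) j))\<^sup>2"
        by (simp only: Sadj_pow_Suc)
    qed
    finally show ?thesis .
  qed
  also have "(\<Sum>v\<in>Lev N. \<Sum>t\<in>{0<..<k v}. (cmod (coef f v t))\<^sup>2) =
       (\<Sum>j\<in>Jeq N. (cmod (inner0 ((Sadj ^^ (Suc N - lev j)) f) j))\<^sup>2)"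
  proof -
    have "(\<Sum>v\<in>Lev N. \<Sum>t\<in>{0<..<k v}. (cmod (coef f v t))\<^sup>2) = (\<Sum>(v,t)\<in>Jeq N. (cmod (coef f v t))\<^sup>2)"
      unfolding Jeq_def by (rule sum.Sigma) (use Lev_fin in auto)
    also have "\<dots> = (\<Sum>j\<in>Jeq N. (cmod (inner0 ((Sadj ^^ (Suc N - lev j)) f) j))\<^sup>2)"
      by (rule sum.cong[OF refl]) (auto simp: lev_Jeq inner0_Jeq)
    finally show ?thesis .
  qed
  also have "(\<Sum>j\<in>Jle N. (cmod (inner0 ((Sadj ^^ (Suc N - lev j)) f) j))\<^sup>2) +
       (\<Sum>j\<in>Jeq N. (cmod (inner0 ((Sadj ^^ (Suc N - lev j)) f) j))\<^sup>2) =
       (\<Sum>j\<in>Jle (Suc N). (cmod (inner0 ((Sadj ^^ (Suc N - lev j)) f) j))\<^sup>2)"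
    unfolding Jle_Suc by (rule sum.union_disjoint[symmetric]) (use Jle_fin Jeq_fin Jle_Jeq_disj in auto)
  finally show ?case .
qed

end

lemma ennreal_infsum_zeroD:
  fixes h :: "'x \<Rightarrow> ennreal"
  assumes "infsum h A = 0" "x \<in> A"
  shows "h x = 0"
proof -
  have "sum h {x} \<le> infsum h A"
    unfolding ennreal_infsum_SUP[of h] by (rule SUP_upper) (use assms in auto)
  then show ?thesis using assms by simp
qed

lemma dftc_cong: "(\<And>i. i < k \<Longrightarrow> x i = y i) \<Longrightarrow> dftc k x t = dftc k y t"
  unfolding dftc_def by simp

lemma dftc_lin:
  "dftc k (\<lambda>i. a * x i + b * y i) t = a * dftc k x t + b * dftc k y t"
  unfolding dftc_def by (simp add: sum.distrib sum_distrib_left algebra_simps)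

lemma dftc_const:
  assumes "0 < t" "t < k"
  shows "dftc k (\<lambda>i. C) t = 0"
proof -
  have "(\<Sum>i<k. omg k ^ (i * 0) * cnj (omg k ^ (i * t))) = 0"
    using dft_orth[of k 0 t] assms by simp
  then have "(\<Sum>i<k. cnj (omg k ^ (i * t))) = 0" by simp
  then show ?thesis unfolding dftc_def by (simp add: sum_distrib_left[symmetric])
qed

context tree begin

definition enorm :: "('a \<Rightarrow> complex) \<Rightarrow> ennreal" where
  "enorm f = (\<Sum>\<^sub>\<infinity>x\<in>V. ennreal ((cmod (f x))\<^sup>2))"

definition menorm :: "(('a \<times> nat) \<times> nat \<Rightarrow> complex) \<Rightarrow> ennreal" where
  "menorm c = (\<Sum>\<^sub>\<infinity>p\<in>J \<times> (UNIV :: nat set). ennreal ((cmod (c p))\<^sup>2))"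

definition M :: "(('a \<times> nat) \<times> nat \<Rightarrow> complex) set" where
  "M = {c. (\<forall>p. fst p \<notin> J \<longrightarrow> c p = 0) \<and> menorm c < \<infinity>}"

lemma ell2_iff: "f \<in> ell2 V \<longleftrightarrow> (\<forall>x. x \<notin> V \<longrightarrow> f x = 0) \<and> enorm f < \<infinity>"
  unfolding ell2_def enorm_def using real_summable_iff_ennreal[of V "\<lambda>x. (cmod (f x))\<^sup>2"] by auto

lemma ell2_normsq_enorm: "f \<in> ell2 V \<Longrightarrow> ennreal (ell2_normsq V f) = enorm f"
  unfolding ell2_def ell2_normsq_def enorm_def by (rule real_infsum_ennreal) auto

lemma enorm_levels: "enorm f = (\<Sum>\<^sub>\<infinity>N\<in>UNIV. \<Sum>x\<in>Lev N. ennreal ((cmod (f x))\<^sup>2))"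
proof -
  have bij: "bij_betw snd (Sigma UNIV Lev) V"
    unfolding bij_betw_def
  proof
    show "inj_on snd (Sigma UNIV Lev)"
    proof (rule inj_onI)
      fix p q :: "nat \<times> 'a"
      assume p: "p \<in> Sigma UNIV Lev" and q: "q \<in> Sigma UNIV Lev" and e: "snd p = snd q"
      have "snd p \<in> Lev (fst p)" "snd p \<in> Lev (fst q)" using p q e by auto
      then have "fst p = fst q" by (rule Lev_disj)
      then show "p = q" using e by (simp add: prod_eq_iff)
    qed
    show "snd ` Sigma UNIV Lev = V"
    proof
      show "snd ` Sigma UNIV Lev \<subseteq> V"
      proof
        fix x assume "x \<in> snd ` Sigma UNIV Lev"
        then obtain p where "p \<in> Sigma UNIV Lev" "x = snd p" by blast
        then have "x \<in> Lev (fst p)" by (cases p) simp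
        then show "x \<in> V" using Lev_sub by blast
      qed
      show "V \<subseteq> snd ` Sigma UNIV Lev"
      proof
        fix x assume "x \<in> V"
        then have "(lvl x, x) \<in> Sigma UNIV Lev" using lvl_in by simp
        then show "x \<in> snd ` Sigma UNIV Lev" by (rule rev_image_eqI) simp
      qed
    qed
  qed
  have "enorm f = (\<Sum>\<^sub>\<infinity>p\<in>Sigma UNIV Lev. ennreal ((cmod (f (snd p)))\<^sup>2))"
    unfolding enorm_def by (rule infsum_reindex_bij_betw[OF bij, symmetric])
  also have "\<dots> = (\<Sum>\<^sub>\<infinity>N\<in>UNIV. \<Sum>x\<in>Lev N. ennreal ((cmod (f x))\<^sup>2))"
    by (subst ennreal_infsum_Sigma_finite) (auto simp: Lev_fin)
  finally show ?thesis .
qed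

lemma menorm_levels:
  "menorm c = (\<Sum>\<^sub>\<infinity>N\<in>UNIV. \<Sum>j\<in>Jle N. ennreal ((cmod (c (j, N - lev j)))\<^sup>2))"
proof -
  let ?g = "\<lambda>p :: nat \<times> ('a \<times> nat). (snd p, fst p - lev (snd p))"
  have bij: "bij_betw ?g (Sigma UNIV Jle) (J \<times> UNIV)"
    unfolding bij_betw_def
  proof
    show "inj_on ?g (Sigma UNIV Jle)"
    proof (rule inj_onI)
      fix p q :: "nat \<times> ('a \<times> nat)"
      assume p: "p \<in> Sigma UNIV Jle" and q: "q \<in> Sigma UNIV Jle" and e: "?g p = ?g q"
      have s: "snd p = snd q" using e by simp
      have "lev (snd p) \<le> fst p" "lev (snd q) \<le> fst q" using p q by (auto simp: Jle_def)
      moreover have "fst p - lev (snd p) = fst q - lev (snd q)" using e s by simp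
      ultimately have "fst p = fst q" using s by simp
      then show "p = q" using s by (simp add: prod_eq_iff)
    qed
    show "?g ` Sigma UNIV Jle = J \<times> UNIV"
    proof (rule set_eqI, rule iffI)
      fix p assume "p \<in> ?g ` Sigma UNIV Jle"
      then obtain q where "q \<in> Sigma UNIV Jle" "p = ?g q" by blast
      then show "p \<in> J \<times> UNIV" by (auto simp: Jle_def)
    next
      fix p assume p: "p \<in> J \<times> (UNIV :: nat set)"
      obtain j n where pj: "p = (j, n)" by (cases p)
      have mem: "(lev j + n, j) \<in> Sigma UNIV Jle" using p pj by (auto simp: Jle_def)
      have eq: "p = ?g (lev j + n, j)" using pj by simp
      show "p \<in> ?g ` Sigma UNIV Jle" by (rule rev_image_eqI[where f="?g", OF mem eq])
    qed
  qed
  have "menorm c = (\<Sum>\<^sub>\<infinity>p\<in>Sigma UNIV Jle. ennreal ((cmod (c (?g p)))\<^sup>2))"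
    unfolding menorm_def by (rule infsum_reindex_bij_betw[OF bij, symmetric])
  also have "\<dots> = (\<Sum>\<^sub>\<infinity>N\<in>UNIV. \<Sum>j\<in>Jle N. ennreal ((cmod (c (j, N - lev j)))\<^sup>2))"
    by (subst ennreal_infsum_Sigma_finite) (auto simp: Jle_fin)
  finally show ?thesis .
qed

lemma Phi_in_J: "j \<in> J \<Longrightarrow> Phi f (j, n) = inner0 ((Sadj ^^ n) f) j"
  unfolding Phi_def by simp

lemma parseval: "enorm f = menorm (Phi f)"
  unfolding enorm_levels menorm_levels
proof (rule infsum_cong)
  fix N :: nat
  have "(\<Sum>x\<in>Lev N. ennreal ((cmod (f x))\<^sup>2)) = ennreal (\<Sum>x\<in>Lev N. (cmod (f x))\<^sup>2)"
    by (rule sum_ennreal) simp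
  also have "\<dots> = ennreal (\<Sum>j\<in>Jle N. (cmod (inner0 ((Sadj ^^ (N - lev j)) f) j))\<^sup>2)"
    by (simp only: parseval_lev)
  also have "\<dots> = (\<Sum>j\<in>Jle N. ennreal ((cmod (inner0 ((Sadj ^^ (N - lev j)) f) j))\<^sup>2))"
    by (rule sum_ennreal[symmetric]) simp
  also have "\<dots> = (\<Sum>j\<in>Jle N. ennreal ((cmod (Phi f (j, N - lev j)))\<^sup>2))"
    by (rule sum.cong[OF refl]) (simp add: Phi_in_J Jle_def)
  finally show "(\<Sum>x\<in>Lev N. ennreal ((cmod (f x))\<^sup>2)) = (\<Sum>j\<in>Jle N. ennreal ((cmod (Phi f (j, N - lev j)))\<^sup>2))" .
qed

lemma Sadj_lin: "Sadj (\<lambda>x. a * f x + b * g x) = (\<lambda>v. a * Sadj f v + b * Sadj g v)"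
  unfolding Sadj_def by (simp add: sum.distrib sum_distrib_left algebra_simps)

lemma Sadj_pow_lin:
  "(Sadj ^^ n) (\<lambda>x. a * f x + b * g x) = (\<lambda>v. a * (Sadj ^^ n) f v + b * (Sadj ^^ n) g v)"
  by (induction n) (simp_all add: Sadj_lin)

lemma coef_lin: "coef (\<lambda>x. a * f x + b * g x) v t = a * coef f v t + b * coef g v t"
  unfolding coef_def by (rule dftc_lin)

lemma inner0_lin: "inner0 (\<lambda>x. a * f x + b * g x) j = a * inner0 f j + b * inner0 g j"
  unfolding inner0_def by (simp add: coef_lin)

lemma Phi_lin: "Phi (\<lambda>x. a * f x + b * g x) = (\<lambda>p. a * Phi f p + b * Phi g p)"
  unfolding Phi_def by (rule ext) (simp add: Sadj_pow_lin inner0_lin)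

lemma Phi_add: "Phi (\<lambda>x. f x + g x) = (\<lambda>p. Phi f p + Phi g p)"
  using Phi_lin[of 1 f 1 g] by simp

lemma Phi_scale: "Phi (\<lambda>x. a * f x) = (\<lambda>p. a * Phi f p)"
  using Phi_lin[of a f 0 f] by simp

lemma Phi_inj:
  assumes f: "\<forall>x. x \<notin> V \<longrightarrow> f x = 0" and g: "\<forall>x. x \<notin> V \<longrightarrow> g x = 0"
    and eq: "Phi f = Phi g"
  shows "f = g"
proof -
  have "Phi (\<lambda>x. 1 * f x + (-1) * g x) = (\<lambda>p. 0)"
    unfolding Phi_lin eq by simp
  then have "enorm (\<lambda>x. 1 * f x + (-1) * g x) = 0"
    unfolding parseval menorm_def by simp
  then have "\<And>x. x \<in> V \<Longrightarrow> ennreal ((cmod (1 * f x + (-1) * g x))\<^sup>2) = 0"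
    unfolding enorm_def by (rule ennreal_infsum_zeroD)
  then have fg: "\<And>x. x \<in> V \<Longrightarrow> f x = g x" by simp
  show ?thesis
  proof (rule ext)
    fix x show "f x = g x" using f g fg by (cases "x \<in> V") auto
  qed
qed

subsection \<open>The shift\<close>

lemma wt_sq: "v \<in> V \<Longrightarrow> of_nat (k v) * (complex_of_real (wt v) * complex_of_real (wt v)) = 1"
  using csq[of "k v"] k_pos[of v] unfolding wt_def by (simp add: mult_ac)

lemma Sadj_S:
  assumes f: "\<forall>x. x \<notin> V \<longrightarrow> f x = 0"
  shows "Sadj (S f) = f"
proof
  fix v
  show "Sadj (S f) v = f v"
  proof (cases "v \<in> V")
    case True
    have "\<And>u. u \<in> Chi E v \<Longrightarrow> S f u = complex_of_real (wt v) * f v"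
      using Chi_sub Chi_not_r parent_Chi by (auto simp: S_apply)
    then have "Sadj (S f) v = complex_of_real (wt v) * (\<Sum>u\<in>Chi E v. complex_of_real (wt v) * f v)"
      unfolding Sadj_def by simp
    also have "\<dots> = of_nat (k v) * (complex_of_real (wt v) * complex_of_real (wt v)) * f v"
      by (simp add: k_def mult_ac)
    also have "\<dots> = f v" using wt_sq[OF True] by simp
    finally show ?thesis .
  next
    case False
    then show ?thesis using f Chi_out by (simp add: Sadj_def)
  qed
qed

lemma inner0_S: "j \<in> J \<Longrightarrow> inner0 (S f) j = 0"
proof -
  assume jJ: "j \<in> J"
  have jc: "j = (r, 0) \<or> (fst j \<in> V \<and> 0 < snd j \<and> snd j < k (fst j))"
    by (rule J_cases[OF jJ])
  show ?thesis
  proof (cases "j = (r, 0)")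
    case True then show ?thesis by (simp add: inner0_def S_apply)
  next
    case False
    then have c2: "fst j \<in> V" "0 < snd j" "snd j < k (fst j)" using jc by auto
    obtain v t where j: "j = (v, t)" by (cases j)
    have "S f (ch v i) = complex_of_real (wt v) * f v" if "i < k v" for i
    proof -
      have c: "ch v i \<in> Chi E v" by (rule ch_in[OF that])
      then have "ch v i \<in> V" "ch v i \<noteq> r" "parent E (ch v i) = v"
        using Chi_sub Chi_not_r parent_Chi by auto
      then show ?thesis by (simp add: S_apply)
    qed
    then have "coef (S f) v t = dftc (k v) (\<lambda>i. complex_of_real (wt v) * f v) t"
      unfolding coef_def by (rule dftc_cong)
    also have "\<dots> = 0" using c2 j by (intro dftc_const) auto
    finally show ?thesis using c2 j by (simp add: inner0_def)
  qed
qed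

definition mshift :: "(('a \<times> nat) \<times> nat \<Rightarrow> complex) \<Rightarrow> ('a \<times> nat) \<times> nat \<Rightarrow> complex" where
  "mshift c p = (if snd p = 0 then 0 else c (fst p, snd p - 1))"

lemma Phi_S:
  assumes f: "\<forall>x. x \<notin> V \<longrightarrow> f x = 0"
  shows "Phi (S f) = mshift (Phi f)"
proof
  fix p :: "('a \<times> nat) \<times> nat"
  obtain j n where p: "p = (j, n)" by (cases p)
  show "Phi (S f) p = mshift (Phi f) p"
  proof (cases n)
    case 0 then show ?thesis using p inner0_S by (simp add: Phi_def mshift_def)
  next
    case (Suc m)
    have "(Sadj ^^ n) (S f) = (Sadj ^^ m) f" using Suc by (simp only: Sadj_pow_Suc Sadj_S[OF f])
    then show ?thesis using p Suc by (simp add: Phi_def mshift_def)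
  qed
qed

lemma menorm_mshift: "menorm (mshift c) = menorm c"
proof -
  let ?h = "\<lambda>p :: ('a \<times> nat) \<times> nat. (fst p, Suc (snd p))"
  have "menorm (mshift c) = (\<Sum>\<^sub>\<infinity>p\<in>?h ` (J \<times> UNIV). ennreal ((cmod (mshift c p))\<^sup>2))"
    unfolding menorm_def
  proof (rule infsum_cong_neutral)
    fix p assume p: "p \<in> J \<times> UNIV - ?h ` (J \<times> UNIV)"
    obtain a b where pab: "p = (a, b)" by (cases p)
    have "b = 0"
    proof (rule ccontr)
      assume "b \<noteq> 0"
      then obtain m where m: "b = Suc m" by (cases b) auto
      have "p = ?h (a, m)" using pab m by simp
      moreover have "(a, m) \<in> J \<times> UNIV" using p pab by auto
      ultimately show False using p by blast
    qed
    then have "snd p = 0" using pab by simp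
    then show "ennreal ((cmod (mshift c p))\<^sup>2) = 0" by (simp add: mshift_def)
  qed auto
  also have "\<dots> = (\<Sum>\<^sub>\<infinity>p\<in>J \<times> UNIV. ennreal ((cmod (mshift c (?h p)))\<^sup>2))"
    by (subst infsum_reindex) (auto simp: inj_on_def comp_def)
  also have "\<dots> = menorm c"
    unfolding menorm_def mshift_def by simp
  finally show ?thesis .
qed

lemma S_ell2: "f \<in> ell2 V \<Longrightarrow> S f \<in> ell2 V"
proof -
  assume f: "f \<in> ell2 V"
  then have f0: "\<forall>x. x \<notin> V \<longrightarrow> f x = 0" by (simp add: ell2_iff)
  have "enorm (S f) = enorm f"
    by (simp add: parseval Phi_S[OF f0] menorm_mshift)
  then show ?thesis using f unfolding ell2_iff by (auto simp: S_apply)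
qed

end

context tree begin

primrec Rec :: "nat \<Rightarrow> (('a \<times> nat) \<times> nat \<Rightarrow> complex) \<Rightarrow> 'a \<Rightarrow> complex" where
  "Rec 0 d = (\<lambda>x. d ((r, 0), 0))"
| "Rec (Suc N) d = (\<lambda>u. idft (k (parent E u))
      (\<lambda>t. if t = 0 then Rec N (\<lambda>p. d (fst p, Suc (snd p))) (parent E u) else d ((parent E u, t), 0))
      (pos (parent E u) u))"

lemma rec_claim:
  assumes "\<forall>x\<in>Lev N. g x = Rec N d x" and "j \<in> Jle N"
  shows "inner0 ((Sadj ^^ (N - lev j)) g) j = d (j, N - lev j)"
  using assms
proof (induction N arbitrary: d g j)
  case 0
  then have j: "j = (r, 0)" by (simp add: Jle_0)
  have "g r = Rec 0 d r" using 0 by (simp add: Lev_0)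
  then show ?case using j by (simp add: inner0_def lev_def)
next
  case (Suc N)
  define a where "a v = (\<lambda>t. if t = 0 then Rec N (\<lambda>p. d (fst p, Suc (snd p))) v else d ((v, t), 0))" for v
  have gch: "g (ch v i) = idft (k v) (a v) i" if v: "v \<in> Lev N" and i: "i < k v" for v i
  proof -
    have c: "ch v i \<in> Chi E v" by (rule ch_in[OF i])
    then have "ch v i \<in> Lev (Suc N)" using Chi_Lev[OF v] by blast
    then have "g (ch v i) = Rec (Suc N) d (ch v i)" using Suc.prems(1) by blast
    also have "\<dots> = idft (k (parent E (ch v i))) (\<lambda>t. if t = 0 then Rec N (\<lambda>p. d (fst p, Suc (snd p))) (parent E (ch v i))
        else d ((parent E (ch v i), t), 0)) (pos (parent E (ch v i)) (ch v i))"
      by simp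
    also have "\<dots> = idft (k v) (a v) i"
      unfolding parent_Chi[OF c] pos_ch[OF i] a_def ..
    finally show ?thesis .
  qed
  have coefg: "coef g v t = a v t" if v: "v \<in> Lev N" and t: "t < k v" for v t
  proof -
    have kp: "k v > 0" using k_pos Lev_sub v by blast
    have "coef g v t = dftc (k v) (idft (k v) (a v)) t"
      unfolding coef_def by (rule dftc_cong) (rule gch[OF v])
    also have "\<dots> = a v t" by (rule dft_idft[OF kp t])
    finally show ?thesis .
  qed
  have Sg: "\<forall>x\<in>Lev N. Sadj g x = Rec N (\<lambda>p. d (fst p, Suc (snd p))) x"
  proof
    fix v assume v: "v \<in> Lev N"
    have kp: "k v > 0" using k_pos Lev_sub v by blast
    have "Sadj g v = coef g v 0" by (simp add: coef0)
    also have "\<dots> = a v 0" by (rule coefg[OF v kp])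
    finally show "Sadj g v = Rec N (\<lambda>p. d (fst p, Suc (snd p))) v" by (simp add: a_def)
  qed
  from Suc.prems(2) have "j \<in> Jle N \<or> j \<in> Jeq N" by (simp add: Jle_Suc)
  then show ?case
  proof
    assume j: "j \<in> Jle N"
    then have e: "Suc N - lev j = Suc (N - lev j)" unfolding Jle_def by auto
    have "inner0 ((Sadj ^^ (N - lev j)) (Sadj g)) j = (\<lambda>p. d (fst p, Suc (snd p))) (j, N - lev j)"
      by (rule Suc.IH[OF Sg j])
    then show ?thesis by (simp only: e Sadj_pow_Suc) simp
  next
    assume j: "j \<in> Jeq N"
    obtain v t where jv: "j = (v, t)" by (cases j)
    have v: "v \<in> Lev N" and t: "0 < t" "t < k v" using j jv by (auto simp: Jeq_def)
    have l: "lev j = Suc N" by (rule lev_Jeq[OF j])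
    have "inner0 g j = coef g v t" using jv t by (simp add: inner0_def)
    also have "\<dots> = d ((v, t), 0)" using coefg[OF v t(2)] t by (simp add: a_def)
    finally show ?thesis using l jv by simp
  qed
qed

definition Psi :: "(('a \<times> nat) \<times> nat \<Rightarrow> complex) \<Rightarrow> 'a \<Rightarrow> complex" where
  "Psi c = (\<lambda>x. if x \<in> V then Rec (lvl x) c x else 0)"

lemma Phi_Psi:
  assumes c: "\<forall>p. fst p \<notin> J \<longrightarrow> c p = 0"
  shows "Phi (Psi c) = c"
proof
  fix p :: "('a \<times> nat) \<times> nat"
  obtain j n where p: "p = (j, n)" by (cases p)
  show "Phi (Psi c) p = c p"
  proof (cases "j \<in> J")
    case True
    let ?N = "lev j + n"
    have h: "\<forall>x\<in>Lev ?N. Psi c x = Rec ?N c x"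
      using Lev_iff by (auto simp: Psi_def)
    have jl: "j \<in> Jle ?N" using True by (simp add: Jle_def)
    have "inner0 ((Sadj ^^ (?N - lev j)) (Psi c)) j = c (j, ?N - lev j)"
      by (rule rec_claim[OF h jl])
    then show ?thesis using True p by (simp add: Phi_def)
  next
    case False
    have "c p = 0" using c[rule_format, of p] False p by simp
    then show ?thesis using False p by (simp add: Phi_def)
  qed
qed

lemma Psi_vanish: "\<forall>x. x \<notin> V \<longrightarrow> Psi c x = 0"
  by (simp add: Psi_def)

lemma Phi_bij: "bij_betw Phi (ell2 V) M"
  unfolding bij_betw_def
proof
  show "inj_on Phi (ell2 V)"
    by (rule inj_onI) (rule Phi_inj, auto simp: ell2_iff)
  show "Phi ` ell2 V = M"
  proof
    show "Phi ` ell2 V \<subseteq> M"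
    proof
      fix c assume "c \<in> Phi ` ell2 V"
      then obtain f where f: "f \<in> ell2 V" "c = Phi f" by blast
      have "menorm c < \<infinity>" using f by (simp add: parseval[symmetric] ell2_iff)
      then show "c \<in> M" using f by (simp add: M_def Phi_def)
    qed
    show "M \<subseteq> Phi ` ell2 V"
    proof
      fix c assume c: "c \<in> M"
      then have c0: "\<forall>p. fst p \<notin> J \<longrightarrow> c p = 0" by (simp add: M_def)
      have e: "Phi (Psi c) = c" by (rule Phi_Psi[OF c0])
      have "enorm (Psi c) < \<infinity>" using c by (simp add: parseval e M_def)
      then have "Psi c \<in> ell2 V" using Psi_vanish by (simp add: ell2_iff)
      then show "c \<in> Phi ` ell2 V" using e by (metis imageI)
    qed
  qed
qed

lemma Phi_norm: "f \<in> ell2 V \<Longrightarrow> ennreal (ell2_normsq V f) = menorm (Phi f)"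
  by (simp add: ell2_normsq_enorm parseval)

lemma Phi_in_M: "f \<in> ell2 V \<Longrightarrow> Phi f \<in> M"
  using Phi_bij by (auto simp: bij_betw_def)

lemma ell2_vanish: "f \<in> ell2 V \<Longrightarrow> \<forall>x. x \<notin> V \<longrightarrow> f x = 0"
  by (simp add: ell2_iff)

end

lemma cmod_add_sq: "(cmod (a + b))\<^sup>2 \<le> 2 * (cmod a)\<^sup>2 + 2 * (cmod b)\<^sup>2"
proof -
  have "cmod (a + b) \<le> cmod a + cmod b" by (rule norm_triangle_ineq)
  then have "(cmod (a + b))\<^sup>2 \<le> (cmod a + cmod b)\<^sup>2"
    by (rule power_mono) simp
  also have "\<dots> \<le> 2 * (cmod a)\<^sup>2 + 2 * (cmod b)\<^sup>2"
    using sum_squares_ge_zero[of "cmod a - cmod b" 0] by (simp add: power2_eq_square algebra_simps)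
  finally show ?thesis .
qed

lemma ell2_add:
  assumes f: "f \<in> ell2 A" and g: "g \<in> ell2 A"
  shows "(\<lambda>x. f x + g x) \<in> ell2 A"
proof -
  have sf: "(\<lambda>x. (cmod (f x))\<^sup>2) summable_on A" and sg: "(\<lambda>x. (cmod (g x))\<^sup>2) summable_on A"
    using f g by (auto simp: ell2_def)
  have "(\<lambda>x. 2 * (cmod (f x))\<^sup>2 + 2 * (cmod (g x))\<^sup>2) summable_on A"
    by (intro summable_on_add summable_on_cmult_right sf sg)
  then have "(\<lambda>x. (cmod (f x + g x))\<^sup>2) summable_on A"
    by (rule summable_on_comparison_test) (auto intro: cmod_add_sq)
  then show ?thesis using f g by (auto simp: ell2_def)
qed

lemma ell2_scale:
  assumes f: "f \<in> ell2 A"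
  shows "(\<lambda>x. c * f x) \<in> ell2 A"
proof -
  have sf: "(\<lambda>x. (cmod (f x))\<^sup>2) summable_on A" using f by (auto simp: ell2_def)
  have "(\<lambda>x. (cmod c)\<^sup>2 * (cmod (f x))\<^sup>2) summable_on A"
    by (intro summable_on_cmult_right sf)
  then have "(\<lambda>x. (cmod (c * f x))\<^sup>2) summable_on A"
    by (simp add: norm_mult power_mult_distrib)
  then show ?thesis using f by (auto simp: ell2_def)
qed

lemma ell2_zero: "(\<lambda>x. 0) \<in> ell2 A"
  by (simp add: ell2_def)

lemma ell2_sum:
  assumes "finite F" "\<And>j. j \<in> F \<Longrightarrow> d j \<in> ell2 A"
  shows "(\<lambda>x. \<Sum>j\<in>F. a j * d j x) \<in> ell2 A"
  using assms
proof (induction F rule: finite_induct)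
  case empty then show ?case by (simp add: ell2_zero)
next
  case (insert j F)
  have "(\<lambda>x. a j * d j x + (\<Sum>j\<in>F. a j * d j x)) \<in> ell2 A"
    by (intro ell2_add ell2_scale) (use insert in auto)
  then show ?case using insert by simp
qed

lemma lin_dep:
  fixes y :: "'i \<Rightarrow> 'b \<Rightarrow> complex"
  assumes "finite B" "finite I" "card B < card I"
  shows "\<exists>a. (\<exists>i\<in>I. a i \<noteq> 0) \<and> (\<forall>b\<in>B. (\<Sum>i\<in>I. a i * y i b) = 0)"
  using assms
proof (induction B arbitrary: I y rule: finite_induct)
  case empty
  then have "I \<noteq> {}" by auto
  then obtain i where "i \<in> I" by blast
  then show ?case by (intro exI[of _ "\<lambda>_. 1"]) auto
next
  case (insert b0 B)
  show ?case
  proof (cases "\<forall>i\<in>I. y i b0 = 0")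
    case True
    have "card B < card I" using insert by simp
    then obtain a where a: "\<exists>i\<in>I. a i \<noteq> 0" "\<forall>b\<in>B. (\<Sum>i\<in>I. a i * y i b) = 0"
      using insert.IH[OF insert.prems(1)] by blast
    then show ?thesis using True by (intro exI[of _ a]) auto
  next
    case False
    then obtain p where p: "p \<in> I" "y p b0 \<noteq> 0" by blast
    define I' where "I' = I - {p}"
    define y' where "y' i b = y i b - (y i b0 / y p b0) * y p b" for i b
    have fI': "finite I'" using insert.prems(1) by (simp add: I'_def)
    have cI': "card B < card I'" using insert p by (simp add: I'_def)
    obtain a' where a': "\<exists>i\<in>I'. a' i \<noteq> 0" "\<forall>b\<in>B. (\<Sum>i\<in>I'. a' i * y' i b) = 0"
      using insert.IH[OF fI' cI'] by blast
    define a where "a i = (if i = p then - (\<Sum>i\<in>I'. a' i * y i b0) / y p b0 else a' i)" for i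
    have key: "(\<Sum>i\<in>I. a i * y i b) = (\<Sum>i\<in>I'. a' i * y' i b)" for b
    proof -
      have "(\<Sum>i\<in>I. a i * y i b) = a p * y p b + (\<Sum>i\<in>I'. a i * y i b)"
        unfolding I'_def using p insert.prems(1) by (simp add: sum.remove)
      also have "(\<Sum>i\<in>I'. a i * y i b) = (\<Sum>i\<in>I'. a' i * y i b)"
        by (rule sum.cong) (auto simp: a_def I'_def)
      also have "(\<Sum>i\<in>I'. a' i * y' i b) =
          (\<Sum>i\<in>I'. a' i * y i b) - (\<Sum>i\<in>I'. a' i * y i b0) / y p b0 * y p b"
        unfolding y'_def by (simp add: algebra_simps sum_subtractf sum_distrib_left sum_distrib_right sum_divide_distrib)
      moreover have "a p * y p b = - (\<Sum>i\<in>I'. a' i * y i b0) / y p b0 * y p b"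
        by (simp add: a_def)
      ultimately show ?thesis by simp
    qed
    show ?thesis
    proof (intro exI[of _ a] conjI)
      from a'(1) obtain i where i: "i \<in> I'" "a' i \<noteq> 0" by blast
      have iI: "i \<in> I" using i by (auto simp: I'_def)
      have "i \<noteq> p" using i by (auto simp: I'_def)
      then have ai: "a i = a' i" by (simp add: a_def)
      show "\<exists>i\<in>I. a i \<noteq> 0"
      proof (rule bexI[of _ i])
        show "a i \<noteq> 0" using ai i(2) by simp
        show "i \<in> I" by (rule iI)
      qed
      show "\<forall>b\<in>insert b0 B. (\<Sum>i\<in>I. a i * y i b) = 0"
      proof
        fix b assume "b \<in> insert b0 B"
        then show "(\<Sum>i\<in>I. a i * y i b) = 0"
        proof
          assume b: "b = b0"
          have "\<And>i. y' i b0 = 0" unfolding y'_def using p by simp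
          then show ?thesis unfolding key b by simp
        next
          assume "b \<in> B" then show ?thesis unfolding key using a'(2) by simp
        qed
      qed
    qed
  qed
qed

definition ecard :: "'x set \<Rightarrow> ennreal" where
  "ecard A = (if finite A then of_nat (card A) else \<infinity>)"

lemma infsum_one_ecard: "(\<Sum>\<^sub>\<infinity>x\<in>A. (1::ennreal)) = ecard A"
proof (cases "finite A")
  case True then show ?thesis by (simp add: ecard_def)
next
  case False
  have "(\<Sum>\<^sub>\<infinity>x\<in>A. (1::ennreal)) = \<infinity>"
    by (rule infsum_superconst_infinite_ennreal[where b=1]) (use False in auto)
  then show ?thesis using False by (simp add: ecard_def)
qed

lemma ecard_insert: "a \<notin> A \<Longrightarrow> ecard (insert a A) = 1 + ecard A"
  by (simp add: ecard_def)

lemma ecard_eq_bij: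
  assumes "countable A" "countable B" "ecard A = ecard B"
  shows "\<exists>s. bij_betw s A B"
proof (cases "finite A")
  case True
  then have fB: "finite B" and "card A = card B" using assms(3) by (auto simp: ecard_def split: if_splits)
  then show ?thesis using True by (metis finite_same_card_bij)
next
  case False
  then have iB: "infinite B" using assms(3) by (auto simp: ecard_def split: if_splits)
  obtain g1 where g1: "bij_betw g1 (UNIV :: nat set) A" using countable_infiniteE'[OF assms(1) False] by blast
  obtain g2 where g2: "bij_betw g2 (UNIV :: nat set) B" using countable_infiniteE'[OF assms(2) iB] by blast
  have "bij_betw (g2 \<circ> inv_into UNIV g1) A B"
    by (rule bij_betw_trans[OF bij_betw_inv_into[OF g1] g2])
  then show ?thesis by blast
qed

lemma bij_ecard: "bij_betw s A B \<Longrightarrow> ecard A = ecard B"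
  unfolding ecard_def using bij_betw_finite bij_betw_same_card by metis

definition mnorm :: "'x set \<Rightarrow> ('x \<times> nat \<Rightarrow> complex) \<Rightarrow> ennreal" where
  "mnorm A c = (\<Sum>\<^sub>\<infinity>p\<in>A \<times> (UNIV :: nat set). ennreal ((cmod (c p))\<^sup>2))"

definition mM :: "'x set \<Rightarrow> ('x \<times> nat \<Rightarrow> complex) set" where
  "mM A = {c. (\<forall>p. fst p \<notin> A \<longrightarrow> c p = 0) \<and> mnorm A c < \<infinity>}"

definition mshf :: "('x \<times> nat \<Rightarrow> complex) \<Rightarrow> 'x \<times> nat \<Rightarrow> complex" where
  "mshf c p = (if snd p = 0 then 0 else c (fst p, snd p - 1))"

definition relab :: "'y set \<Rightarrow> ('y \<Rightarrow> 'x) \<Rightarrow> ('x \<times> nat \<Rightarrow> complex) \<Rightarrow> 'y \<times> nat \<Rightarrow> complex" where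
  "relab B \<rho> c p = (if fst p \<in> B then c (\<rho> (fst p), snd p) else 0)"

lemma relab_norm:
  assumes "bij_betw \<rho> B A"
  shows "mnorm B (relab B \<rho> c) = mnorm A c"
proof -
  let ?g = "\<lambda>q :: 'a \<times> nat. (\<rho> (fst q), snd q)"
  have bij: "bij_betw ?g (B \<times> UNIV) (A \<times> UNIV)"
    using assms unfolding bij_betw_def inj_on_def by (auto simp: image_iff)
  have "mnorm B (relab B \<rho> c) = (\<Sum>\<^sub>\<infinity>q\<in>B \<times> UNIV. ennreal ((cmod (c (?g q)))\<^sup>2))"
    unfolding mnorm_def relab_def by (rule infsum_cong) auto
  also have "\<dots> = mnorm A c"
    unfolding mnorm_def by (rule infsum_reindex_bij_betw[OF bij])
  finally show ?thesis .
qed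

lemma relab_M:
  assumes "bij_betw \<rho> B A" "c \<in> mM A"
  shows "relab B \<rho> c \<in> mM B"
  using assms relab_norm[OF assms(1)] by (auto simp: mM_def relab_def)

lemma relab_relab:
  assumes "\<And>j. j \<in> A \<Longrightarrow> \<rho> (\<sigma> j) = j" "\<And>j. j \<in> A \<Longrightarrow> \<sigma> j \<in> B" "c \<in> mM A"
  shows "relab A \<sigma> (relab B \<rho> c) = c"
proof
  fix p :: "'a \<times> nat"
  show "relab A \<sigma> (relab B \<rho> c) p = c p"
  proof (cases "fst p \<in> A")
    case True then show ?thesis using assms(1,2) by (simp add: relab_def)
  next
    case False
    have "c p = 0" using assms(3) False unfolding mM_def by blast
    then show ?thesis using False by (simp add: relab_def)
  qed
qed

lemma relab_bij:
  assumes "bij_betw \<sigma> A B"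
  shows "bij_betw (relab B (inv_into A \<sigma>)) (mM A) (mM B)"
proof (rule bij_betwI[where g = "relab A \<sigma>"])
  have b1: "bij_betw (inv_into A \<sigma>) B A" by (rule bij_betw_inv_into[OF assms])
  show "relab B (inv_into A \<sigma>) \<in> mM A \<rightarrow> mM B" using relab_M[OF b1] by blast
  show "relab A \<sigma> \<in> mM B \<rightarrow> mM A" using relab_M[OF assms] by blast
  show "relab A \<sigma> (relab B (inv_into A \<sigma>) x) = x" if "x \<in> mM A" for x
    by (rule relab_relab[OF _ _ that]) (use assms in \<open>auto simp: bij_betw_def inv_into_f_f\<close>)
  show "relab B (inv_into A \<sigma>) (relab A \<sigma> y) = y" if "y \<in> mM B" for y
    by (rule relab_relab[OF _ _ that]) (use assms in \<open>auto simp: bij_betw_def f_inv_into_f inv_into_into\<close>)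
qed

lemma relab_add: "relab B \<rho> (\<lambda>p. c p + d p) = (\<lambda>p. relab B \<rho> c p + relab B \<rho> d p)"
  by (rule ext) (simp add: relab_def)

lemma relab_scale: "relab B \<rho> (\<lambda>p. a * c p) = (\<lambda>p. a * relab B \<rho> c p)"
  by (rule ext) (simp add: relab_def)

lemma relab_mshf: "relab B \<rho> (mshf c) = mshf (relab B \<rho> c)"
  by (rule ext) (simp add: relab_def mshf_def)

lemma ennreal_eq_nonneg: "0 \<le> a \<Longrightarrow> 0 \<le> b \<Longrightarrow> ennreal a = ennreal b \<Longrightarrow> a = b"
  by simp

context tree begin

lemma menorm_eq: "menorm c = mnorm J c"
  by (simp add: menorm_def mnorm_def)

lemma M_eq: "M = mM J"
  by (auto simp: M_def mM_def menorm_eq)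

lemma mshift_eq: "mshift c = mshf c"
  by (rule ext) (simp add: mshift_def mshf_def)

lemma Psi_ell2: "c \<in> M \<Longrightarrow> Psi c \<in> ell2 V"
proof -
  assume c: "c \<in> M"
  then have c0: "\<forall>p. fst p \<notin> J \<longrightarrow> c p = 0" by (simp add: M_def)
  have e: "Phi (Psi c) = c" by (rule Phi_Psi[OF c0])
  have "enorm (Psi c) < \<infinity>" using c by (simp add: parseval e M_def)
  then show "Psi c \<in> ell2 V" using Psi_vanish by (simp add: ell2_iff)
qed

lemma Phi_zero: "Phi (\<lambda>x. 0) = (\<lambda>p. 0)"
  using Phi_scale[of 0 "\<lambda>x. 0"] by simp

lemma Phi_sum:
  assumes "finite F"
  shows "Phi (\<lambda>x. \<Sum>j\<in>F. a j * G j x) = (\<lambda>p. \<Sum>j\<in>F. a j * Phi (G j) p)"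
  using assms
proof (induction F rule: finite_induct)
  case empty then show ?case by (simp add: Phi_zero)
next
  case (insert j F)
  have "Phi (\<lambda>x. \<Sum>j\<in>insert j F. a j * G j x) = Phi (\<lambda>x. a j * G j x + (\<Sum>j\<in>F. a j * G j x))"
    using insert by simp
  also have "\<dots> = (\<lambda>p. a j * Phi (G j) p + Phi (\<lambda>x. \<Sum>j\<in>F. a j * G j x) p)"
    using Phi_lin[of "a j" "G j" 1 "\<lambda>x. \<Sum>j\<in>F. a j * G j x"] by simp
  finally show ?case using insert by simp
qed

lemma J_Sigma: "J = insert (r, 0) (Sigma V (\<lambda>v. {0<..<k v}))"
  unfolding J_def by auto

lemma sum_card_J:
  "(\<Sum>\<^sub>\<infinity>v\<in>branching V E. (of_nat (card (Chi E v) - 1) :: ennreal)) + 1 = ecard J"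
proof -
  have "(\<Sum>\<^sub>\<infinity>v\<in>branching V E. (of_nat (card (Chi E v) - 1) :: ennreal)) =
        (\<Sum>\<^sub>\<infinity>v\<in>V. (of_nat (k v - 1) :: ennreal))"
  proof (rule infsum_cong_neutral)
    fix v assume "v \<in> V - branching V E"
    then have "k v - 1 = 0" unfolding branching_def k_def by auto
    then show "(of_nat (k v - 1) :: ennreal) = 0" by simp
  next
    fix v assume "v \<in> branching V E - V"
    then show "(of_nat (card (Chi E v) - 1) :: ennreal) = 0" by (auto simp: branching_def)
  next
    fix v assume "v \<in> branching V E \<inter> V"
    then show "(of_nat (card (Chi E v) - 1) :: ennreal) = of_nat (k v - 1)" by (simp add: k_def)
  qed
  also have "\<dots> = (\<Sum>\<^sub>\<infinity>v\<in>V. \<Sum>t\<in>{0<..<k v}. (1::ennreal))"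
    by (rule infsum_cong) simp
  also have "\<dots> = (\<Sum>\<^sub>\<infinity>p\<in>Sigma V (\<lambda>v. {0<..<k v}). (1::ennreal))"
    by (rule ennreal_infsum_Sigma_finite[symmetric]) simp
  also have "\<dots> = ecard (Sigma V (\<lambda>v. {0<..<k v}))"
    by (rule infsum_one_ecard)
  finally show ?thesis
    unfolding J_Sigma by (subst ecard_insert) (auto simp: add.commute)
qed

lemma countable_J: "countable V \<Longrightarrow> countable J"
proof -
  assume V: "countable V"
  have "countable (V \<times> (UNIV :: nat set))" using V by simp
  then have "countable (insert (r, 0) (V \<times> (UNIV :: nat set)))" by simp
  moreover have "J \<subseteq> insert (r, 0) (V \<times> (UNIV :: nat set))" unfolding J_def by auto
  ultimately show ?thesis by (rule countable_subset[rotated])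
qed

end

lemma U_zero:
  assumes "\<forall>f\<in>ell2 A. \<forall>c. U (\<lambda>x. c * f x) = (\<lambda>y. c * U f y)"
  shows "U (\<lambda>x. 0) = (\<lambda>y. 0)"
  using assms[rule_format, OF ell2_zero, of 0] by simp

lemma U_sum:
  assumes add: "\<forall>f\<in>ell2 A. \<forall>g\<in>ell2 A. U (\<lambda>x. f x + g x) = (\<lambda>y. U f y + U g y)"
    and sc: "\<forall>f\<in>ell2 A. \<forall>c. U (\<lambda>x. c * f x) = (\<lambda>y. c * U f y)"
    and F: "finite F" and d: "\<And>j. j \<in> F \<Longrightarrow> d j \<in> ell2 A"
  shows "U (\<lambda>x. \<Sum>j\<in>F. a j * d j x) = (\<lambda>y. \<Sum>j\<in>F. a j * U (d j) y)"
  using F d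
proof (induction F rule: finite_induct)
  case empty then show ?case using U_zero[OF sc] by simp
next
  case (insert j F)
  have m1: "(\<lambda>x. a j * d j x) \<in> ell2 A" by (rule ell2_scale) (use insert in auto)
  have m2: "(\<lambda>x. \<Sum>j\<in>F. a j * d j x) \<in> ell2 A" by (rule ell2_sum) (use insert in auto)
  have "U (\<lambda>x. \<Sum>j\<in>insert j F. a j * d j x) = U (\<lambda>x. a j * d j x + (\<Sum>j\<in>F. a j * d j x))"
    using insert by simp
  also have "\<dots> = (\<lambda>y. U (\<lambda>x. a j * d j x) y + U (\<lambda>x. \<Sum>j\<in>F. a j * d j x) y)"
    by (rule add[rule_format, OF m1 m2])
  also have "U (\<lambda>x. a j * d j x) = (\<lambda>y. a j * U (d j) y)"
    by (rule sc[rule_format]) (use insert in auto)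
  also have "U (\<lambda>x. \<Sum>j\<in>F. a j * d j x) = (\<lambda>y. \<Sum>j\<in>F. a j * U (d j) y)"
    using insert by blast
  finally show ?case using insert by simp
qed

lemma inv_props:
  assumes Ub: "bij_betw U (ell2 A) (ell2 B)"
    and add: "\<forall>f\<in>ell2 A. \<forall>g\<in>ell2 A. U (\<lambda>x. f x + g x) = (\<lambda>y. U f y + U g y)"
    and sc: "\<forall>f\<in>ell2 A. \<forall>c. U (\<lambda>x. c * f x) = (\<lambda>y. c * U f y)"
    and sh: "\<forall>f\<in>ell2 A. U (S1 f) = S2 (U f)"
    and S1: "\<forall>f\<in>ell2 A. S1 f \<in> ell2 A"
  shows "bij_betw (inv_into (ell2 A) U) (ell2 B) (ell2 A)"
    and "\<forall>f\<in>ell2 B. \<forall>g\<in>ell2 B. inv_into (ell2 A) U (\<lambda>x. f x + g x) =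
            (\<lambda>y. inv_into (ell2 A) U f y + inv_into (ell2 A) U g y)"
    and "\<forall>f\<in>ell2 B. \<forall>c. inv_into (ell2 A) U (\<lambda>x. c * f x) = (\<lambda>y. c * inv_into (ell2 A) U f y)"
    and "\<forall>f\<in>ell2 B. inv_into (ell2 A) U (S2 f) = S1 (inv_into (ell2 A) U f)"
proof -
  let ?W = "inv_into (ell2 A) U"
  have inj: "inj_on U (ell2 A)" using Ub by (simp add: bij_betw_def)
  have img: "U ` ell2 A = ell2 B" using Ub by (simp add: bij_betw_def)
  have Win: "\<And>f. f \<in> ell2 B \<Longrightarrow> ?W f \<in> ell2 A" using img by (metis inv_into_into)
  have UW: "\<And>f. f \<in> ell2 B \<Longrightarrow> U (?W f) = f" using img by (metis f_inv_into_f)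
  have WU: "\<And>f. f \<in> ell2 A \<Longrightarrow> ?W (U f) = f" using inj by (simp add: inv_into_f_f)
  show "bij_betw ?W (ell2 B) (ell2 A)" by (rule bij_betw_inv_into[OF Ub])
  show "\<forall>f\<in>ell2 B. \<forall>g\<in>ell2 B. ?W (\<lambda>x. f x + g x) = (\<lambda>y. ?W f y + ?W g y)"
  proof (intro ballI)
    fix f g assume f: "f \<in> ell2 B" and g: "g \<in> ell2 B"
    have s: "(\<lambda>y. ?W f y + ?W g y) \<in> ell2 A" by (rule ell2_add[OF Win[OF f] Win[OF g]])
    have "U (\<lambda>y. ?W f y + ?W g y) = (\<lambda>x. f x + g x)"
      using add Win[OF f] Win[OF g] UW[OF f] UW[OF g] by simp
    then show "?W (\<lambda>x. f x + g x) = (\<lambda>y. ?W f y + ?W g y)"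
      using WU[OF s] by simp
  qed
  show "\<forall>f\<in>ell2 B. \<forall>c. ?W (\<lambda>x. c * f x) = (\<lambda>y. c * ?W f y)"
  proof (intro ballI allI)
    fix f c assume f: "f \<in> ell2 B"
    have s: "(\<lambda>y. c * ?W f y) \<in> ell2 A" by (rule ell2_scale[OF Win[OF f]])
    have "U (\<lambda>y. c * ?W f y) = (\<lambda>x. c * f x)"
      using sc Win[OF f] UW[OF f] by simp
    then show "?W (\<lambda>x. c * f x) = (\<lambda>y. c * ?W f y)"
      using WU[OF s] by simp
  qed
  show "\<forall>f\<in>ell2 B. ?W (S2 f) = S1 (?W f)"
  proof
    fix f assume f: "f \<in> ell2 B"
    have "U (S1 (?W f)) = S2 f" using sh Win[OF f] UW[OF f] by simp
    then show "?W (S2 f) = S1 (?W f)" using WU[OF S1[rule_format, OF Win[OF f]]] by simp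
  qed
qed

locale two_trees = T1: tree V1 E1 r1 + T2: tree V2 E2 r2
  for V1 :: "'a set" and E1 r1 and V2 :: "'b set" and E2 r2
begin

lemma construct:
  assumes sig: "bij_betw \<sigma> T1.J T2.J"
  shows "unitarily_equivalent V1 T1.S V2 T2.S"
proof -
  define R where "R = relab T2.J (inv_into T1.J \<sigma>)"
  define W where "W = inv_into (ell2 V2) T2.Phi"
  define U where "U = W \<circ> (R \<circ> T1.Phi)"
  have Rbij: "bij_betw R T1.M T2.M"
    unfolding R_def T1.M_eq T2.M_eq by (rule relab_bij[OF sig])
  have rb: "bij_betw (inv_into T1.J \<sigma>) T2.J T1.J" by (rule bij_betw_inv_into[OF sig])
  have Wbij: "bij_betw W T2.M (ell2 V2)" unfolding W_def by (rule bij_betw_inv_into[OF T2.Phi_bij])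
  have Ubij: "bij_betw U (ell2 V1) (ell2 V2)"
    unfolding U_def by (rule bij_betw_trans[OF bij_betw_trans[OF T1.Phi_bij Rbij] Wbij])
  have Uin: "\<And>f. f \<in> ell2 V1 \<Longrightarrow> U f \<in> ell2 V2" using Ubij by (rule bij_betw_apply)
  have RM: "\<And>f. f \<in> ell2 V1 \<Longrightarrow> R (T1.Phi f) \<in> T2.M"
    by (rule bij_betw_apply[OF Rbij T1.Phi_in_M])
  have PhiU: "\<And>f. f \<in> ell2 V1 \<Longrightarrow> T2.Phi (U f) = R (T1.Phi f)"
  proof -
    fix f assume f: "f \<in> ell2 V1"
    have "R (T1.Phi f) \<in> T2.Phi ` ell2 V2"
      using RM[OF f] T2.Phi_bij by (simp add: bij_betw_def)
    then show "T2.Phi (U f) = R (T1.Phi f)" unfolding U_def W_def by (simp add: f_inv_into_f)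
  qed
  have inj2: "g = h" if "g \<in> ell2 V2" "h \<in> ell2 V2" "T2.Phi g = T2.Phi h" for g h
    by (rule T2.Phi_inj[OF T2.ell2_vanish[OF that(1)] T2.ell2_vanish[OF that(2)] that(3)])
  show ?thesis unfolding unitarily_equivalent_def
  proof (intro exI[of _ U] conjI ballI allI)
    show "bij_betw U (ell2 V1) (ell2 V2)" by (rule Ubij)
  next
    fix f g assume f: "f \<in> ell2 V1" and g: "g \<in> ell2 V1"
    have fg: "(\<lambda>x. f x + g x) \<in> ell2 V1" by (rule ell2_add[OF f g])
    have s2: "(\<lambda>y. U f y + U g y) \<in> ell2 V2" by (rule ell2_add[OF Uin[OF f] Uin[OF g]])
    have "T2.Phi (U (\<lambda>x. f x + g x)) = T2.Phi (\<lambda>y. U f y + U g y)"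
      unfolding PhiU[OF fg] T2.Phi_add PhiU[OF f] PhiU[OF g] T1.Phi_add R_def relab_add ..
    then show "U (\<lambda>x. f x + g x) = (\<lambda>y. U f y + U g y)"
      by (rule inj2[OF Uin[OF fg] s2])
  next
    fix f and c :: complex assume f: "f \<in> ell2 V1"
    have fc: "(\<lambda>x. c * f x) \<in> ell2 V1" by (rule ell2_scale[OF f])
    have s2: "(\<lambda>y. c * U f y) \<in> ell2 V2" by (rule ell2_scale[OF Uin[OF f]])
    have "T2.Phi (U (\<lambda>x. c * f x)) = T2.Phi (\<lambda>y. c * U f y)"
      unfolding PhiU[OF fc] T2.Phi_scale PhiU[OF f] T1.Phi_scale R_def relab_scale ..
    then show "U (\<lambda>x. c * f x) = (\<lambda>y. c * U f y)"
      by (rule inj2[OF Uin[OF fc] s2])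
  next
    fix f assume f: "f \<in> ell2 V1"
    have "ennreal (ell2_normsq V2 (U f)) = T2.menorm (T2.Phi (U f))"
      by (rule T2.Phi_norm[OF Uin[OF f]])
    also have "\<dots> = mnorm T2.J (relab T2.J (inv_into T1.J \<sigma>) (T1.Phi f))"
      unfolding PhiU[OF f] T2.menorm_eq R_def ..
    also have "\<dots> = mnorm T1.J (T1.Phi f)" by (rule relab_norm[OF rb])
    also have "\<dots> = ennreal (ell2_normsq V1 f)"
      unfolding T1.menorm_eq[symmetric] by (rule T1.Phi_norm[OF f, symmetric])
    finally have e: "ennreal (ell2_normsq V2 (U f)) = ennreal (ell2_normsq V1 f)" .
    have "0 \<le> ell2_normsq V2 (U f)" unfolding ell2_normsq_def by (rule infsum_nonneg) simp
    moreover have "0 \<le> ell2_normsq V1 f" unfolding ell2_normsq_def by (rule infsum_nonneg) simp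
    ultimately show "ell2_normsq V2 (U f) = ell2_normsq V1 f" using e by simp
  next
    fix f assume f: "f \<in> ell2 V1"
    have Sf: "T1.S f \<in> ell2 V1" by (rule T1.S_ell2[OF f])
    have S2: "T2.S (U f) \<in> ell2 V2" by (rule T2.S_ell2[OF Uin[OF f]])
    have "T2.Phi (U (T1.S f)) = R (T1.Phi (T1.S f))" by (rule PhiU[OF Sf])
    also have "\<dots> = R (mshf (T1.Phi f))"
      by (simp add: T1.Phi_S[OF T1.ell2_vanish[OF f]] T1.mshift_eq)
    also have "\<dots> = mshf (R (T1.Phi f))" unfolding R_def by (rule relab_mshf)
    also have "\<dots> = T2.Phi (T2.S (U f))"
      by (simp add: T2.Phi_S[OF T2.ell2_vanish[OF Uin[OF f]]] T2.mshift_eq PhiU[OF f])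
    finally show "U (T1.S f) = T2.S (U f)"
      by (rule inj2[OF Uin[OF Sf] S2])
  qed
qed

lemma key:
  assumes Ub: "bij_betw U (ell2 V1) (ell2 V2)"
    and add: "\<forall>f\<in>ell2 V1. \<forall>g\<in>ell2 V1. U (\<lambda>x. f x + g x) = (\<lambda>y. U f y + U g y)"
    and sc: "\<forall>f\<in>ell2 V1. \<forall>c. U (\<lambda>x. c * f x) = (\<lambda>y. c * U f y)"
    and sh: "\<forall>f\<in>ell2 V1. U (T1.S f) = T2.S (U f)"
    and fin2: "finite T2.J"
  shows "finite T1.J \<and> card T1.J \<le> card T2.J"
proof -
  have inj: "inj_on U (ell2 V1)" using Ub by (simp add: bij_betw_def)
  have img: "U ` ell2 V1 = ell2 V2" using Ub by (simp add: bij_betw_def)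
  have Uin: "\<And>f. f \<in> ell2 V1 \<Longrightarrow> U f \<in> ell2 V2" using Ub by (rule bij_betw_apply)
  have main: False if F: "F \<subseteq> T1.J" "finite F" "card T2.J < card F" for F
  proof -
    define e where "e j = (\<lambda>p :: ('a \<times> nat) \<times> nat. if p = (j, 0) then (1::complex) else 0)" for j
    have eM: "e j \<in> T1.M" if j: "j \<in> T1.J" for j
    proof -
      have "T1.menorm (e j) = (\<Sum>\<^sub>\<infinity>p\<in>{(j, 0)}. ennreal ((cmod (e j p))\<^sup>2))"
        unfolding T1.menorm_def by (rule infsum_cong_neutral) (auto simp: e_def j)
      also have "\<dots> = 1" by (simp add: e_def)
      finally have "T1.menorm (e j) < \<infinity>" by simp
      moreover have "\<forall>p. fst p \<notin> T1.J \<longrightarrow> e j p = 0"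
      proof (intro allI impI)
        fix p :: "('a \<times> nat) \<times> nat" assume "fst p \<notin> T1.J"
        then have "p \<noteq> (j, 0)" using j by auto
        then show "e j p = 0" by (simp add: e_def)
      qed
      ultimately show ?thesis unfolding T1.M_def by blast
    qed
    define d where "d j = T1.Psi (e j)" for j
    have dl2: "d j \<in> ell2 V1" if "j \<in> T1.J" for j
      unfolding d_def by (rule T1.Psi_ell2[OF eM[OF that]])
    have Phid: "T1.Phi (d j) = e j" if "j \<in> T1.J" for j
      unfolding d_def by (rule T1.Phi_Psi) (use eM[OF that] in \<open>simp add: T1.M_def\<close>)
    obtain a where a1: "\<exists>j\<in>F. a j \<noteq> 0"
      and a2: "\<forall>i\<in>T2.J. (\<Sum>j\<in>F. a j * T2.Phi (U (d j)) (i, 0)) = 0"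
      using lin_dep[OF fin2 F(2) F(3), of "\<lambda>j i. T2.Phi (U (d j)) (i, 0)"] by blast
    define h where "h = (\<lambda>x. \<Sum>j\<in>F. a j * d j x)"
    have dF: "\<And>j. j \<in> F \<Longrightarrow> d j \<in> ell2 V1" using dl2 F(1) by blast
    have hl2: "h \<in> ell2 V1" unfolding h_def by (rule ell2_sum[OF F(2) dF])
    have Uh: "U h = (\<lambda>y. \<Sum>j\<in>F. a j * U (d j) y)"
      unfolding h_def by (rule U_sum[OF add sc F(2) dF])
    define c where "c = T2.Phi (U h)"
    have c_eq: "c = (\<lambda>p. \<Sum>j\<in>F. a j * T2.Phi (U (d j)) p)"
      unfolding c_def Uh by (rule T2.Phi_sum[OF F(2)])
    have c0: "c (i, 0) = 0" for i
    proof (cases "i \<in> T2.J")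
      case True then show ?thesis using a2 c_eq by simp
    next
      case False then show ?thesis by (simp add: c_def T2.Phi_def)
    qed
    have cM: "c \<in> T2.M" unfolding c_def by (rule T2.Phi_in_M[OF Uin[OF hl2]])
    define dd where "dd = (\<lambda>p :: ('b \<times> nat) \<times> nat. c (fst p, Suc (snd p)))"
    have sdd: "T2.mshift dd = c"
    proof
      fix p :: "('b \<times> nat) \<times> nat"
      obtain i n where p: "p = (i, n)" by (cases p)
      show "T2.mshift dd p = c p"
        using c0 p by (cases n) (auto simp: T2.mshift_def dd_def)
    qed
    have ddM: "dd \<in> T2.M"
    proof -
      have "T2.menorm dd = T2.menorm c" using T2.menorm_mshift[of dd] sdd by simp
      then show ?thesis using cM unfolding T2.M_def dd_def by auto
    qed
    define g2 where "g2 = T2.Psi dd"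
    have g2l: "g2 \<in> ell2 V2" unfolding g2_def by (rule T2.Psi_ell2[OF ddM])
    have Pg2: "T2.Phi g2 = dd" unfolding g2_def by (rule T2.Phi_Psi) (use ddM in \<open>simp add: T2.M_def\<close>)
    have "T2.Phi (T2.S g2) = c"
      by (simp add: T2.Phi_S[OF T2.ell2_vanish[OF g2l]] Pg2 sdd)
    then have "T2.Phi (T2.S g2) = T2.Phi (U h)" by (simp add: c_def)
    then have Sg2: "T2.S g2 = U h"
      by (rule T2.Phi_inj[OF T2.ell2_vanish[OF T2.S_ell2[OF g2l]] T2.ell2_vanish[OF Uin[OF hl2]]])
    have "g2 \<in> U ` ell2 V1" using g2l img by simp
    then obtain g1 where g1: "g1 \<in> ell2 V1" "U g1 = g2" by (rule imageE) simp
    have Sg1: "T1.S g1 \<in> ell2 V1" by (rule T1.S_ell2[OF g1(1)])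
    have "U (T1.S g1) = U h" using sh g1 Sg2 by simp
    then have hS': "T1.S g1 = h" by (rule inj_onD[OF inj _ Sg1 hl2])
    then have hS: "h = T1.S g1" by simp
    from a1 obtain j0 where j0: "j0 \<in> F" "a j0 \<noteq> 0" by blast
    have "T1.Phi h (j0, 0) = 0"
      by (simp add: hS T1.Phi_S[OF T1.ell2_vanish[OF g1(1)]] T1.mshift_def)
    moreover have "T1.Phi h (j0, 0) = a j0"
    proof -
      have "T1.Phi h (j0, 0) = (\<Sum>j\<in>F. a j * T1.Phi (d j) (j0, 0))"
        unfolding h_def T1.Phi_sum[OF F(2)] ..
      also have "\<dots> = (\<Sum>j\<in>F. a j * e j (j0, 0))"
        by (rule sum.cong[OF refl]) (use Phid F(1) in auto)
      also have "\<dots> = (\<Sum>j\<in>F. if j = j0 then a j else 0)"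
        by (rule sum.cong[OF refl]) (auto simp: e_def)
      also have "\<dots> = a j0" using j0 F(2) by simp
      finally show ?thesis .
    qed
    ultimately show False using j0 by simp
  qed
  show ?thesis
  proof (cases "finite T1.J")
    case False
    obtain F where F: "F \<subseteq> T1.J" "finite F" "card F = Suc (card T2.J)"
      using infinite_arbitrarily_large[OF False] by blast
    have "card T2.J < card F" using F(3) by simp
    then have False by (rule main[OF F(1) F(2)])
    then show ?thesis ..
  next
    case True
    have "\<not> card T2.J < card T1.J"
    proof
      assume "card T2.J < card T1.J"
      then show False by (rule main[OF subset_refl True])
    qed
    then show ?thesis using True by simp
  qed
qed

end

theorem mainTheorem2:
  fixes V1 :: "'a set" and E1 :: "('a \<times> 'a) set" and r1 :: 'a
    and V2 :: "'b set" and E2 :: "('b \<times> 'b) set" and r2 :: 'b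
  assumes "rooted_directed_tree V1 E1 r1" "leafless V1 E1" "locally_finite V1 E1"
      and "countable V1" "infinite V1"
      and "rooted_directed_tree V2 E2 r2" "leafless V2 E2" "locally_finite V2 E2"
      and "countable V2" "infinite V2"
  shows "unitarily_equivalent V1 (dirichlet_shift V1 E1 r1 1) V2 (dirichlet_shift V2 E2 r2 1)
     \<longleftrightarrow> (\<Sum>\<^sub>\<infinity>v\<in>branching V1 E1. (of_nat (card (Chi E1 v) - 1) :: ennreal))
       = (\<Sum>\<^sub>\<infinity>v\<in>branching V2 E2. (of_nat (card (Chi E2 v) - 1) :: ennreal))"
proof -
  interpret T1: tree V1 E1 r1 by (rule tree.intro) (use assms in auto)
  interpret T2: tree V2 E2 r2 by (rule tree.intro) (use assms in auto)
  interpret A: two_trees V1 E1 r1 V2 E2 r2 ..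
  interpret B: two_trees V2 E2 r2 V1 E1 r1 ..
  let ?s1 = "(\<Sum>\<^sub>\<infinity>v\<in>branching V1 E1. (of_nat (card (Chi E1 v) - 1) :: ennreal))"
  let ?s2 = "(\<Sum>\<^sub>\<infinity>v\<in>branching V2 E2. (of_nat (card (Chi E2 v) - 1) :: ennreal))"
  have c1: "countable T1.J" by (rule T1.countable_J[OF assms(4)])
  have c2: "countable T2.J" by (rule T2.countable_J[OF assms(9)])
  have siff: "?s1 = ?s2 \<longleftrightarrow> ecard T1.J = ecard T2.J"
  proof -
    have "ecard T1.J = ecard T2.J \<longleftrightarrow> 1 + ?s1 = 1 + ?s2"
      using T1.sum_card_J T2.sum_card_J by (simp add: add.commute)
    also have "\<dots> \<longleftrightarrow> ?s1 = ?s2" by (simp add: ennreal_add_left_cancel)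
    finally show ?thesis by simp
  qed
  show ?thesis unfolding siff
  proof
    assume "unitarily_equivalent V1 T1.S V2 T2.S"
    then obtain U where Ub: "bij_betw U (ell2 V1) (ell2 V2)"
      and add: "\<forall>f\<in>ell2 V1. \<forall>g\<in>ell2 V1. U (\<lambda>x. f x + g x) = (\<lambda>y. U f y + U g y)"
      and sc: "\<forall>f\<in>ell2 V1. \<forall>c. U (\<lambda>x. c * f x) = (\<lambda>y. c * U f y)"
      and sh: "\<forall>f\<in>ell2 V1. U (T1.S f) = T2.S (U f)"
      unfolding unitarily_equivalent_def by blast
    have S1: "\<forall>f\<in>ell2 V1. T1.S f \<in> ell2 V1" using T1.S_ell2 by blast
    note inv = inv_props[OF Ub add sc sh S1]
    have k1: "finite T2.J \<Longrightarrow> finite T1.J \<and> card T1.J \<le> card T2.J"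
      by (rule A.key[OF Ub add sc sh])
    have k2: "finite T1.J \<Longrightarrow> finite T2.J \<and> card T2.J \<le> card T1.J"
      by (rule B.key[OF inv(1) inv(2) inv(3) inv(4)])
    show "ecard T1.J = ecard T2.J"
    proof (cases "finite T1.J")
      case True
      then have "finite T2.J" "card T2.J \<le> card T1.J" using k2 by auto
      moreover have "card T1.J \<le> card T2.J" using k1 \<open>finite T2.J\<close> by auto
      ultimately show ?thesis using True by (simp add: ecard_def)
    next
      case False
      then have "infinite T2.J" using k1 by auto
      then show ?thesis using False by (simp add: ecard_def)
    qed
  next
    assume "ecard T1.J = ecard T2.J"
    then obtain \<sigma> where "bij_betw \<sigma> T1.J T2.J" using ecard_eq_bij c1 c2 by blast
    then show "unitarily_equivalent V1 T1.S V2 T2.S" by (rule A.construct)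
  qed
qed

end
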